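(* Let $(\mathcal{X},d)$ be a Polish metric space and let $(X_N)_{N\in\mathbb{N}}$ be a Markov chain on $\mathcal{X}$ with transition kernel $(P_x)_{x\in\mathcal{X}}$, where $x\mapsto P_x$ is measurable and each $P_x$ has finite first moment. Assume there exists $\kappa>0$ such that $W_1(P_x,P_y)\le(1-\kappa)\,d(x,y)$ for all $x,y\in\mathcal{X}$, and let $\pi$ be the invariant probability measure. Let $T\ge1$, $T_0\ge0$ be integers and $\hat\pi(f):=\frac1T\sum_{k=T_0+1}^{T_0+T}f(X_k)$. Assume there is a Lipschitz function $S:\mathcal{X}\to\mathbb{R}$ with $\|S\|_{\mathrm{Lip}}\le C$ such that $\frac{\sigma(x)^2}{n_x\kappa}\le S(x)$ for all $x\in\mathcal{X}$. Then for every Lipschitz $f$ and every $x\in\mathcal{X}$, \[ \operatorname{Var}_x\hat\pi(f)\le \begin{cases} \dfrac{\|f\|_{\mathrm{Lip}}^2}{\kappa T}\Big(\mathbb{E}_\pi S+\dfrac{C}{\kappa T}E(x)\Big), & \text{if } T_0=0,\\[2mm] \dfrac{\|f\|_{\mathrm{Lip}}^2}{\kappa T}\Big(\big(1+\dfrac{1}{\kappa T}\big)\mathbb{E}_\pi S+\dfrac{2C(1-\kappa)^{T_0}}{\kappa T}E(x)\Big), & \text{otherwise.} \end{cases} \]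
   Context: $W_1$ is the $L^1$ Wasserstein distance. $\operatorname{Var}_x$ is the variance for the chain started at $X_0=x$. $E(x):=\int d(x,y)\,\pi(dy)$ (eccentricity). $\sigma(x)^2:=\frac12\iint d(y,z)^2P_x(dy)P_x(dz)$; $n_x:=\inf\{\iint d(y,z)^2P_x(dy)P_x(dz)/\iint|f(y)-f(z)|^2P_x(dy)P_x(dz): f\ 1\text{-Lipschitz}\}$. $\|f\|_{\mathrm{Lip}}:=\sup_{x\ne y}|f(x)-f(y)|/d(x,y)$. *)

theory Defs
  imports "HOL-Analysis.Analysis" "HOL-Probability.Probability"
begin

text \<open>Lipschitz seminorm; the 0 is inserted only so that the value is 0 on a one-point space.\<close>
definition lip_norm :: "('a::metric_space \<Rightarrow> real) \<Rightarrow> real" where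
  "lip_norm f = Sup (insert 0 {\<bar>f x - f y\<bar> / dist x y | x y. x \<noteq> y})"

definition is_lipschitz :: "('a::metric_space \<Rightarrow> real) \<Rightarrow> bool" where
  "is_lipschitz f \<longleftrightarrow> (\<exists>L. lipschitz_on L UNIV f)"

definition couplings :: "'a::topological_space measure \<Rightarrow> 'a measure \<Rightarrow> ('a \<times> 'a) measure set" where
  "couplings \<mu> \<nu> = {\<gamma>. sets \<gamma> = sets (borel \<Otimes>\<^sub>M borel) \<and> prob_space \<gamma> \<and>
       distr \<gamma> borel fst = \<mu> \<and> distr \<gamma> borel snd = \<nu>}"

definition W1 :: "'a::metric_space measure \<Rightarrow> 'a measure \<Rightarrow> ereal" where
  "W1 \<mu> \<nu> = (INF \<gamma>\<in>couplings \<mu> \<nu>. enn2ereal (\<integral>\<^sup>+ p. ennreal (dist (fst p) (snd p)) \<partial>\<gamma>))"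

text \<open>Law of the path (X_0,...,X_n) of the Markov chain with kernel P started at X_0 = x,
  as a measure on extensional functions on {..n}.\<close>
fun chain_law :: "('a::topological_space \<Rightarrow> 'a measure) \<Rightarrow> 'a \<Rightarrow> nat \<Rightarrow> (nat \<Rightarrow> 'a) measure" where
  "chain_law P x 0 = return (PiM {..0} (\<lambda>_. borel)) (\<lambda>i\<in>{..0::nat}. x)"
| "chain_law P x (Suc n) = chain_law P x n \<bind>
     (\<lambda>\<omega>. distr (P (\<omega> n)) (PiM {..Suc n} (\<lambda>_. borel)) (\<lambda>y. fun_upd \<omega> (Suc n) y))"

definition sigma2 :: "('a::metric_space \<Rightarrow> 'a measure) \<Rightarrow> 'a \<Rightarrow> ennreal" where
  "sigma2 P x = (1/2) * (\<integral>\<^sup>+ y. \<integral>\<^sup>+ z. ennreal ((dist y z)\<^sup>2) \<partial>P x \<partial>P x)"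

definition n_loc :: "('a::metric_space \<Rightarrow> 'a measure) \<Rightarrow> 'a \<Rightarrow> ennreal" where
  "n_loc P x = (INF f\<in>{f. lipschitz_on 1 UNIV f}.
      (\<integral>\<^sup>+ y. \<integral>\<^sup>+ z. ennreal ((dist y z)\<^sup>2) \<partial>P x \<partial>P x) /
      (\<integral>\<^sup>+ y. \<integral>\<^sup>+ z. ennreal ((f y - f z)\<^sup>2) \<partial>P x \<partial>P x))"

definition eccentricity :: "'a::metric_space measure \<Rightarrow> 'a \<Rightarrow> real" where
  "eccentricity \<pi> x = (\<integral> y. dist x y \<partial>\<pi>)"

end

theory Submission imports Defs begin


definition Kst :: "('a::topological_space \<Rightarrow> 'a measure) \<Rightarrow> nat \<Rightarrow> (nat \<Rightarrow> 'a) \<Rightarrow> (nat \<Rightarrow> 'a) measure" where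
  "Kst P n \<omega> = distr (P (\<omega> n)) (PiM {..Suc n} (\<lambda>_. borel)) (\<lambda>y. fun_upd \<omega> (Suc n) y)"

lemma chain_law_Suc': "chain_law P x (Suc n) = chain_law P x n \<bind> Kst P n"
  by (simp add: Kst_def[abs_def])

locale kern =
  fixes P :: "'a::polish_space \<Rightarrow> 'a measure"
  assumes kernel: "P \<in> borel \<rightarrow>\<^sub>M prob_algebra borel"
begin

lemma P_prob: "prob_space (P z)" and sets_P[simp, measurable_cong]: "sets (P z) = sets borel"
  using measurable_space[OF kernel, of z] by (auto simp: space_prob_algebra)

lemma space_P[simp]: "space (P z) = UNIV"
  using sets_eq_imp_space_eq[OF sets_P] by simp

lemma P_sub[measurable]: "P \<in> borel \<rightarrow>\<^sub>M subprob_algebra borel"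
  using measurable_prob_algebraD[OF kernel] .

lemma Kst_meas[measurable]:
  "Kst P n \<in> PiM {..n} (\<lambda>_. borel) \<rightarrow>\<^sub>M subprob_algebra (PiM {..Suc n} (\<lambda>_. (borel::'a measure)))"
  unfolding Kst_def[abs_def]
proof (rule measurable_distr2)
  show "(\<lambda>\<omega>. P (\<omega> n)) \<in> PiM {..n} (\<lambda>_. borel) \<rightarrow>\<^sub>M subprob_algebra borel"
    by (rule measurable_compose[OF _ P_sub]) simp
  show "(\<lambda>(\<omega>, y). fun_upd \<omega> (Suc n) y) \<in> PiM {..n} (\<lambda>_. borel) \<Otimes>\<^sub>M borel \<rightarrow>\<^sub>M PiM {..Suc n} (\<lambda>_. borel)"
    using measurable_add_dim[of "Suc n" "{..n}" "\<lambda>_. borel"] by (simp add: atMost_Suc)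
qed

lemma chain_facts: "prob_space (chain_law P x n) \<and> sets (chain_law P x n) = sets (PiM {..n} (\<lambda>_. borel))"
proof (induction n)
  case 0
  show ?case by (auto intro!: prob_space_return simp: space_PiM)
next
  case (Suc n)
  then interpret prob_space "chain_law P x n" by simp
  have K: "Kst P n \<in> chain_law P x n \<rightarrow>\<^sub>M subprob_algebra (PiM {..Suc n} (\<lambda>_. (borel::'a measure)))"
    using Kst_meas measurable_cong_sets Suc by blast
  have ps: "prob_space (Kst P n \<omega>)" if "\<omega> \<in> space (chain_law P x n)" for \<omega>
    unfolding Kst_def
    apply (rule prob_space.prob_space_distr[OF P_prob])
    apply (rule measurable_fun_upd[where J="{..n}"])
    using that Suc sets_eq_imp_space_eq[of "chain_law P x n" "PiM {..n} (\<lambda>_. borel)"]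
    by (auto simp: atMost_Suc)
  show ?case unfolding chain_law_Suc'
    apply (intro conjI prob_space_bind[OF _ K] sets_bind_measurable[OF K])
    using ps not_empty by auto
qed

end


lemma lip_meas[measurable]: "lipschitz_on L UNIV g \<Longrightarrow> (g :: 'a::metric_space \<Rightarrow> real) \<in> borel_measurable borel"
  by (rule borel_measurable_continuous_onI[OF lipschitz_on_continuous_on])

lemma lip_bound: "lipschitz_on L UNIV g \<Longrightarrow> \<bar>(g::'a::metric_space \<Rightarrow> real) y - g z\<bar> \<le> L * dist y z"
  by (auto simp: lipschitz_on_def dist_real_def)

locale mc = kern P for P :: "'a::polish_space \<Rightarrow> 'a measure" +
  fixes \<pi> :: "'a measure" and \<kappa> C :: real and S :: "'a \<Rightarrow> real"
  assumes first_moment: "\<And>z. integrable (P z) (\<lambda>y. dist z y)"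
    and kappa_pos: "\<kappa> > 0" and kappa_le: "\<kappa> \<le> 1"
    and contraction: "\<And>y z. W1 (P y) (P z) \<le> ereal ((1 - \<kappa>) * dist y z)"
    and pi_prob: "prob_space \<pi>" and pi_sets: "sets \<pi> = sets borel"
    and pi_inv: "\<pi> \<bind> P = \<pi>"
    and S_lip: "lipschitz_on C UNIV S"
    and S_bound: "\<And>z. sigma2 P z < \<infinity> \<and>
                       enn2ereal (sigma2 P z / (n_loc P z * ennreal \<kappa>)) \<le> ereal (S z)"
begin

definition Pf :: "('a \<Rightarrow> real) \<Rightarrow> 'a \<Rightarrow> real" where
  "Pf g z = (\<integral>y. g y \<partial>P z)"

lemma lip_int: fixes g :: "'a \<Rightarrow> real" assumes "lipschitz_on L UNIV g" shows "integrable (P z) g"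
proof (rule Bochner_Integration.integrable_bound[where f="\<lambda>y. \<bar>g z\<bar> + L * dist z y"])
  interpret prob_space "P z" by (rule P_prob)
  show "integrable (P z) (\<lambda>y. \<bar>g z\<bar> + L * dist z y)"
    using first_moment[of z] by auto
  show "g \<in> borel_measurable (P z)" using lip_meas[OF assms] by simp
  show "AE y in P z. norm (g y) \<le> norm (\<bar>g z\<bar> + L * dist z y)"
  proof (rule AE_I2)
    fix y
    have "\<bar>g y - g z\<bar> \<le> L * dist z y" using lip_bound[OF assms, of y z] by (simp add: dist_commute)
    moreover have "0 \<le> L * dist z y" using assms by (simp add: lipschitz_on_def)
    ultimately show "norm (g y) \<le> norm (\<bar>g z\<bar> + L * dist z y)" by simp
  qed
qed

lemma rho_nn: "0 \<le> 1 - \<kappa>" using kappa_le by simp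

lemma Pf_contr: fixes g :: "'a \<Rightarrow> real" assumes g: "lipschitz_on L UNIV g"
  shows "\<bar>Pf g y - Pf g z\<bar> \<le> L * (1 - \<kappa>) * dist y z"
proof (rule field_le_epsilon)
  fix e :: real assume e: "0 < e"
  have L0: "0 \<le> L" using g by (simp add: lipschitz_on_def)
  define \<epsilon> where "\<epsilon> = e / (L + 1)"
  have eps: "0 < \<epsilon>" using e L0 by (simp add: \<epsilon>_def)
  have "W1 (P y) (P z) < ereal ((1 - \<kappa>) * dist y z + \<epsilon>)"
    by (rule le_less_trans[OF contraction]) (use eps in simp)
  then obtain \<gamma> where gam: "\<gamma> \<in> couplings (P y) (P z)"
    and lt: "enn2ereal (\<integral>\<^sup>+ p. ennreal (dist (fst p) (snd p)) \<partial>\<gamma>) < ereal ((1 - \<kappa>) * dist y z + \<epsilon>)"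
    unfolding W1_def INF_less_iff by blast
  have sg: "sets \<gamma> = sets (borel \<Otimes>\<^sub>M borel)" and pg: "prob_space \<gamma>"
    and m1: "distr \<gamma> borel fst = P y" and m2: "distr \<gamma> borel snd = P z"
    using gam by (auto simp: couplings_def)
  have fstm: "fst \<in> \<gamma> \<rightarrow>\<^sub>M borel"
    by (subst measurable_cong_sets[OF sg refl]) (rule measurable_fst)
  have sndm: "snd \<in> \<gamma> \<rightarrow>\<^sub>M borel"
    by (subst measurable_cong_sets[OF sg refl]) (rule measurable_snd)
  have gm: "g \<in> borel_measurable borel" using lip_meas[OF g] .
  have i1: "integrable \<gamma> (\<lambda>p. g (fst p))"
    using integrable_distr_eq[OF fstm gm] lip_int[OF g, of y] m1 by simp
  have i2: "integrable \<gamma> (\<lambda>p. g (snd p))"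
    using integrable_distr_eq[OF sndm gm] lip_int[OF g, of z] m2 by simp
  have "Pf g y - Pf g z = (\<integral>p. g (fst p) - g (snd p) \<partial>\<gamma>)"
    unfolding Pf_def using integral_distr[OF fstm gm] integral_distr[OF sndm gm] m1 m2 i1 i2
    by simp
  then have "\<bar>Pf g y - Pf g z\<bar> \<le> (\<integral>\<^sup>+p. norm (g (fst p) - g (snd p)) \<partial>\<gamma>)"
    using integral_norm_bound_ennreal[OF Bochner_Integration.integrable_diff[OF i1 i2]] by simp
  also have "\<dots> \<le> (\<integral>\<^sup>+p. ennreal L * ennreal (dist (fst p) (snd p)) \<partial>\<gamma>)"
    apply (rule nn_integral_mono)
    using lip_bound[OF g] L0 by (simp add: ennreal_mult[symmetric])
  also have "\<dots> = ennreal L * (\<integral>\<^sup>+p. ennreal (dist (fst p) (snd p)) \<partial>\<gamma>)"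
    apply (rule nn_integral_cmult)
    using fstm sndm by measurable
  also have "\<dots> \<le> ennreal L * ennreal ((1 - \<kappa>) * dist y z + \<epsilon>)"
  proof -
    have pos: "0 \<le> (1 - \<kappa>) * dist y z + \<epsilon>" using rho_nn eps by simp
    have "(\<integral>\<^sup>+p. ennreal (dist (fst p) (snd p)) \<partial>\<gamma>) \<le> ennreal ((1 - \<kappa>) * dist y z + \<epsilon>)"
      using lt pos by (metis enn2ereal_ennreal less_eq_ennreal.rep_eq order.strict_implies_order)
    then show ?thesis by (rule mult_left_mono) simp
  qed
  also have "\<dots> = ennreal (L * ((1 - \<kappa>) * dist y z + \<epsilon>))"
    using L0 eps rho_nn by (simp add: ennreal_mult)
  finally have "\<bar>Pf g y - Pf g z\<bar> \<le> L * ((1 - \<kappa>) * dist y z + \<epsilon>)"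
    using L0 eps rho_nn by (simp add: ennreal_le_iff2) (auto intro!: mult_nonneg_nonneg)
  also have "\<dots> \<le> L * (1 - \<kappa>) * dist y z + e"
  proof -
    have "L * \<epsilon> \<le> e" using L0 e by (simp add: \<epsilon>_def field_simps)
    then show ?thesis by (simp add: algebra_simps)
  qed
  finally show "\<bar>Pf g y - Pf g z\<bar> \<le> L * (1 - \<kappa>) * dist y z + e" .
qed

lemma Pf_lip: fixes g :: "'a \<Rightarrow> real" assumes g: "lipschitz_on L UNIV g" shows "lipschitz_on (L * (1 - \<kappa>)) UNIV (Pf g)"
  using Pf_contr[OF g] g rho_nn by (auto simp: lipschitz_on_def dist_real_def)

end


context mc begin

lemma S_nonneg: "0 \<le> S z"
  using S_bound[of z] by (metis enn2ereal_nonneg ereal_less_eq(5) order_trans)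

lemma var_bound:
  fixes h :: "'a \<Rightarrow> real"
  assumes hl: "lipschitz_on L UNIV h"
  shows "integrable (P z) (\<lambda>y. (h y)\<^sup>2) \<and> (\<integral>y. (h y - Pf h z)\<^sup>2 \<partial>P z) \<le> \<kappa> * L\<^sup>2 * S z"
proof -
  interpret prob_space "P z" by (rule P_prob)
  have pU: "prob UNIV = 1" using prob_space by simp
  have L0: "0 \<le> L" using hl by (simp add: lipschitz_on_def)
  have hm[measurable]: "h \<in> borel_measurable borel" using lip_meas[OF hl] .
  define A where "A = (\<integral>\<^sup>+ y. \<integral>\<^sup>+ w. ennreal ((dist y w)\<^sup>2) \<partial>P z \<partial>P z)"
  have sig: "sigma2 P z = (1/2) * A" by (simp add: sigma2_def A_def)
  have Afin: "A \<noteq> \<top>"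
    using S_bound[of z] unfolding sig by (auto simp: ennreal_mult_eq_top_iff)
  have "\<exists>y0. (\<integral>\<^sup>+ w. ennreal ((dist y0 w)\<^sup>2) \<partial>P z) \<noteq> \<top>"
  proof (rule ccontr)
    assume "\<not> ?thesis"
    then have "A = (\<integral>\<^sup>+ y. \<top> \<partial>P z)" unfolding A_def by (intro nn_integral_cong) auto
    then have "A = \<top>" using emeasure_space_1 by simp
    with Afin show False by simp
  qed
  then obtain y0 where y0: "(\<integral>\<^sup>+ w. ennreal ((dist y0 w)\<^sup>2) \<partial>P z) \<noteq> \<top>" by blast
  have id2: "integrable (P z) (\<lambda>w. (dist y0 w)\<^sup>2)"
    by (rule integrableI_nonneg) (use y0 in \<open>auto simp: top.not_eq_extremum\<close>)
  have hsq: "integrable (P z) (\<lambda>y. (h y)\<^sup>2)"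
  proof (rule Bochner_Integration.integrable_bound[where f="\<lambda>w. 2 * (h y0)\<^sup>2 + 2 * L\<^sup>2 * (dist y0 w)\<^sup>2"])
    show "integrable (P z) (\<lambda>w. 2 * (h y0)\<^sup>2 + 2 * L\<^sup>2 * (dist y0 w)\<^sup>2)"
      using id2 by auto
    show "(\<lambda>y. (h y)\<^sup>2) \<in> borel_measurable (P z)" by simp
    show "AE y in P z. norm ((h y)\<^sup>2) \<le> norm (2 * (h y0)\<^sup>2 + 2 * L\<^sup>2 * (dist y0 y)\<^sup>2)"
    proof (rule AE_I2)
      fix y
      have b: "\<bar>h y - h y0\<bar> \<le> L * dist y0 y" using lip_bound[OF hl, of y y0] by (simp add: dist_commute)
      have "(h y - h y0)\<^sup>2 \<le> (L * dist y0 y)\<^sup>2"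
        using b abs_le_square_iff[of "h y - h y0" "L * dist y0 y"] L0 by simp
      moreover have "(h y)\<^sup>2 \<le> 2 * (h y0)\<^sup>2 + 2 * (h y - h y0)\<^sup>2"
      proof -
        have "0 \<le> (h y0 - (h y - h y0))\<^sup>2" by simp
        then show ?thesis by (simp add: power2_eq_square algebra_simps)
      qed
      ultimately show "norm ((h y)\<^sup>2) \<le> norm (2 * (h y0)\<^sup>2 + 2 * L\<^sup>2 * (dist y0 y)\<^sup>2)"
        by (simp add: power_mult_distrib)
    qed
  qed
  have hi: "integrable (P z) h" using lip_int[OF hl] .
  define m where "m = Pf h z"
  define Q where "Q = (\<integral>y. (h y)\<^sup>2 \<partial>P z)"
  define v where "v = (\<integral>y. (h y - m)\<^sup>2 \<partial>P z)"
  have mdef: "m = (\<integral>y. h y \<partial>P z)" by (simp add: m_def Pf_def)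
  have v_eq: "v = Q - m\<^sup>2"
  proof -
    have "v = (\<integral>y. (h y)\<^sup>2 - 2 * m * h y + m\<^sup>2 \<partial>P z)"
      unfolding v_def by (intro Bochner_Integration.integral_cong) (auto simp: power2_eq_square algebra_simps)
    also have "\<dots> = Q - 2 * m * m + m\<^sup>2"
      using hsq hi by (simp add: Q_def mdef pU)
    finally show ?thesis by (simp add: power2_eq_square)
  qed
  have v0: "0 \<le> v" unfolding v_def by simp
  have inner: "(\<integral>\<^sup>+ w. ennreal ((h y - h w)\<^sup>2) \<partial>P z) = ennreal ((h y)\<^sup>2 - 2 * h y * m + Q)" for y
  proof -
    have "(\<integral>\<^sup>+ w. ennreal ((h y - h w)\<^sup>2) \<partial>P z) = ennreal (\<integral>w. (h y - h w)\<^sup>2 \<partial>P z)"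
      apply (rule nn_integral_eq_integral)
      subgoal using hsq hi by (auto simp: power2_diff)
      subgoal by simp
      done
    also have "(\<integral>w. (h y - h w)\<^sup>2 \<partial>P z) = (\<integral>w. (h y)\<^sup>2 - 2 * h y * h w + (h w)\<^sup>2 \<partial>P z)"
      by (intro Bochner_Integration.integral_cong) (auto simp: power2_eq_square algebra_simps)
    also have "\<dots> = (h y)\<^sup>2 - 2 * h y * m + Q"
      using hsq hi by (simp add: Q_def mdef pU)
    finally show ?thesis .
  qed
  have outer: "(\<integral>\<^sup>+ y. \<integral>\<^sup>+ w. ennreal ((h y - h w)\<^sup>2) \<partial>P z \<partial>P z) = ennreal (2 * v)"
  proof -
    have "(\<integral>\<^sup>+ y. \<integral>\<^sup>+ w. ennreal ((h y - h w)\<^sup>2) \<partial>P z \<partial>P z)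
        = (\<integral>\<^sup>+ y. ennreal ((h y)\<^sup>2 - 2 * h y * m + Q) \<partial>P z)"
      by (simp add: inner)
    also have "\<dots> = ennreal (\<integral>y. (h y)\<^sup>2 - 2 * h y * m + Q \<partial>P z)"
    proof (rule nn_integral_eq_integral)
      show "integrable (P z) (\<lambda>y. (h y)\<^sup>2 - 2 * h y * m + Q)" using hsq hi by auto
      have "(h y)\<^sup>2 - 2 * h y * m + Q = (h y - m)\<^sup>2 + v" for y
        by (simp add: v_eq power2_diff)
      then show "AE y in P z. 0 \<le> (h y)\<^sup>2 - 2 * h y * m + Q" using v0 by simp
    qed
    also have "(\<integral>y. (h y)\<^sup>2 - 2 * h y * m + Q \<partial>P z) = 2 * v"
      using hsq hi by (simp add: Q_def mdef pU v_eq power2_eq_square)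
    finally show ?thesis .
  qed
  have Snn: "0 \<le> S z" by (rule S_nonneg)
  have main: "v \<le> \<kappa> * L\<^sup>2 * S z"
  proof (cases "v = 0 \<or> L = 0")
    case True
    show ?thesis
    proof (cases "v = 0")
      case True then show ?thesis using Snn kappa_pos by simp
    next
      case False
      with \<open>v = 0 \<or> L = 0\<close> have "L = 0" by simp
      have "(\<integral>\<^sup>+ y. \<integral>\<^sup>+ w. ennreal ((h y - h w)\<^sup>2) \<partial>P z \<partial>P z) = (\<integral>\<^sup>+ y. \<integral>\<^sup>+ w. 0 \<partial>P z \<partial>P z)"
        using lip_bound[OF hl] \<open>L = 0\<close> by (intro nn_integral_cong) (auto)
      then have "ennreal (2 * v) = 0" unfolding outer by simp
      then have "v = 0" using v0 by simp
      with False show ?thesis by simp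
    qed
  next
    case False
    then have vp: "0 < v" and Lp: "0 < L" using v0 L0 by auto
    define g where "g y = h y / L" for y
    have gl: "lipschitz_on 1 UNIV g"
      using lip_bound[OF hl] Lp by (auto simp: lipschitz_on_def g_def dist_real_def divide_le_eq
             simp flip: diff_divide_distrib) (metis mult.commute)
    define b where "b = 2 * v / L\<^sup>2"
    have bp: "0 < b" using vp Lp by (simp add: b_def)
    have B: "(\<integral>\<^sup>+ y. \<integral>\<^sup>+ w. ennreal ((g y - g w)\<^sup>2) \<partial>P z \<partial>P z) = ennreal b"
    proof -
      have "(\<integral>\<^sup>+ y. \<integral>\<^sup>+ w. ennreal ((g y - g w)\<^sup>2) \<partial>P z \<partial>P z)
          = (\<integral>\<^sup>+ y. \<integral>\<^sup>+ w. ennreal ((h y - h w)\<^sup>2) * ennreal (1 / L\<^sup>2) \<partial>P z \<partial>P z)"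
      proof (intro nn_integral_cong)
        fix y w
        have "g y - g w = (h y - h w) / L" by (simp add: g_def diff_divide_distrib)
        then have "(g y - g w)\<^sup>2 = (h y - h w)\<^sup>2 * (1 / L\<^sup>2)" by (simp add: power_divide)
        then show "ennreal ((g y - g w)\<^sup>2) = ennreal ((h y - h w)\<^sup>2) * ennreal (1 / L\<^sup>2)"
          by (simp only: ennreal_mult[symmetric] zero_le_power2 zero_le_divide_1_iff)
      qed
      also have "\<dots> = (\<integral>\<^sup>+ y. (\<integral>\<^sup>+ w. ennreal ((h y - h w)\<^sup>2) \<partial>P z) * ennreal (1 / L\<^sup>2) \<partial>P z)"
        by (intro nn_integral_cong nn_integral_multc) simp
      also have "\<dots> = (\<integral>\<^sup>+ y. \<integral>\<^sup>+ w. ennreal ((h y - h w)\<^sup>2) \<partial>P z \<partial>P z) * ennreal (1 / L\<^sup>2)"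
        by (rule nn_integral_multc) (simp add: inner)
      also have "\<dots> = ennreal b" unfolding outer b_def using v0
        by (simp add: ennreal_mult[symmetric])
      finally show ?thesis .
    qed
    have BA: "ennreal b \<le> A"
      unfolding B[symmetric] A_def
    proof (intro nn_integral_mono)
      fix y w
      have "\<bar>g y - g w\<bar> \<le> dist y w" using lip_bound[OF gl, of y w] by simp
      then have "(g y - g w)\<^sup>2 \<le> (dist y w)\<^sup>2" using abs_le_square_iff[of "g y - g w" "dist y w"] by simp
      then show "ennreal ((g y - g w)\<^sup>2) \<le> ennreal ((dist y w)\<^sup>2)" by simp
    qed
    define a where "a = enn2real A"
    have Aa: "A = ennreal a" using Afin by (simp add: a_def ennreal_enn2real_if)
    have a00: "0 \<le> a" by (simp add: a_def)
    have ba: "b \<le> a" using BA unfolding Aa using a00 by (simp add: ennreal_le_iff)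
    have a0: "0 < a" using ba bp by simp
    have nle: "n_loc P z \<le> A / ennreal b"
      unfolding n_loc_def A_def B[symmetric]
      by (rule INF_lower) (use gl in simp)
    then have nle': "n_loc P z \<le> ennreal (a / b)" using Aa bp a0 by (simp add: divide_ennreal)
    have ntop: "n_loc P z \<noteq> \<top>" using nle' by (auto simp: top_unique)
    define \<nu> where "\<nu> = enn2real (n_loc P z)"
    have nu: "n_loc P z = ennreal \<nu>" "0 \<le> \<nu>"
      using ntop by (simp_all add: \<nu>_def ennreal_enn2real_if)
    have nua: "\<nu> \<le> a / b" using nle' nu bp a0 by (simp add: ennreal_le_iff)
    have h12: "(1/2::ennreal) = ennreal (1/2)" using divide_ennreal[of 1 2] by simp
    have e1: "sigma2 P z = ennreal (a / 2)"
      unfolding sig Aa h12 using a0 by (subst ennreal_mult[symmetric]) auto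
    have e2: "n_loc P z * ennreal \<kappa> = ennreal (\<nu> * \<kappa>)"
      unfolding nu(1) using nu(2) kappa_pos by (subst ennreal_mult[symmetric]) auto
    have sb: "enn2ereal (ennreal (a / 2) / ennreal (\<nu> * \<kappa>)) \<le> ereal (S z)"
      using S_bound[of z] unfolding e1 e2 by simp
    have nup: "0 < \<nu>"
    proof (rule ccontr)
      assume "\<not> 0 < \<nu>" then have "\<nu> = 0" using nu by simp
      then show False using sb a0 by simp
    qed
    have "a / (2 * (\<nu> * \<kappa>)) \<le> S z"
      using sb nup kappa_pos a0 by (simp add: divide_ennreal)
    then have s1: "a / (2 * \<nu>) \<le> \<kappa> * S z"
      using kappa_pos nup by (simp add: field_simps)
    have "\<nu> * b \<le> a" using nua bp by (simp add: field_simps)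
    then have "b \<le> a / \<nu>" using nup by (simp add: field_simps)
    then have "v \<le> L\<^sup>2 * (a / (2 * \<nu>))"
      using Lp by (simp add: b_def field_simps)
    also have "\<dots> \<le> L\<^sup>2 * (\<kappa> * S z)" using s1 by (rule mult_left_mono) simp
    finally show ?thesis by (simp add: ac_simps)
  qed
  show ?thesis using hsq main by (simp add: v_def m_def)
qed

end


lemma lip_dist: "lipschitz_on 1 UNIV (\<lambda>y. dist (x::'a::metric_space) y)"
proof -
  have "\<bar>dist x y - dist x z\<bar> \<le> dist y z" for y z
    using dist_triangle[of x y z] dist_triangle[of x z y] by (simp add: dist_commute abs_le_iff)
  then show ?thesis by (simp add: lipschitz_on_def dist_real_def)
qed

lemma lip_min: assumes "lipschitz_on L UNIV (g::'a::metric_space \<Rightarrow> real)"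
  shows "lipschitz_on L UNIV (\<lambda>y. min (g y) M)"
proof -
  have "\<bar>min (g y) M - min (g z) M\<bar> \<le> L * dist y z" for y z
    using lip_bound[OF assms, of y z] by (simp add: min_def abs_le_iff)
  then show ?thesis using assms by (simp add: lipschitz_on_def dist_real_def)
qed

context mc begin

definition Pit :: "nat \<Rightarrow> ('a \<Rightarrow> real) \<Rightarrow> 'a \<Rightarrow> real" where
  "Pit k g = (Pf ^^ k) g"

lemma Pit_0[simp]: "Pit 0 g = g" by (simp add: Pit_def)
lemma Pit_Suc: "Pit (Suc k) g = Pf (Pit k g)" by (simp add: Pit_def)
lemma Pit_Suc': "Pit (Suc k) g = Pit k (Pf g)" by (simp add: Pit_def funpow_Suc_right del: funpow.simps)

lemma Pit_lip: "lipschitz_on L UNIV g \<Longrightarrow> lipschitz_on (L * (1 - \<kappa>) ^ k) UNIV (Pit k g)"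
proof (induction k)
  case (Suc k)
  then show ?case using Pf_lip[OF Suc.IH[OF Suc.prems]] by (simp add: Pit_Suc ac_simps)
qed simp

lemma Pf_mono: assumes "lipschitz_on L UNIV g" "lipschitz_on L' UNIV g'" "\<And>y. g y \<le> g' y"
  shows "Pf g z \<le> Pf g' z"
  unfolding Pf_def by (rule integral_mono[OF lip_int[OF assms(1)] lip_int[OF assms(2)] assms(3)])

lemma Pit_mono: assumes "lipschitz_on L UNIV g" "lipschitz_on L' UNIV g'" "\<And>y. g y \<le> g' y"
  shows "Pit k g z \<le> Pit k g' z"
  using assms(3)
proof (induction k arbitrary: z)
  case (Suc k)
  show ?case unfolding Pit_Suc
    by (rule Pf_mono[OF Pit_lip[OF assms(1)] Pit_lip[OF assms(2)]]) (use Suc in auto)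
qed simp

lemma Pf_affine: assumes "lipschitz_on L UNIV g"
  shows "Pf (\<lambda>y. c + r * g y) = (\<lambda>y. c + r * Pf g y)"
proof
  fix z
  interpret prob_space "P z" by (rule P_prob)
  have pU: "prob UNIV = 1" using prob_space by simp
  show "Pf (\<lambda>y. c + r * g y) z = c + r * Pf g z"
    unfolding Pf_def using lip_int[OF assms, of z] by (simp add: pU)
qed

lemma Pit_affine: assumes "lipschitz_on L UNIV g"
  shows "Pit k (\<lambda>y. c + r * g y) = (\<lambda>y. c + r * Pit k g y)"
proof (induction k)
  case (Suc k)
  show ?case unfolding Pit_Suc Suc.IH by (rule Pf_affine[OF Pit_lip[OF assms]])
qed simp

lemma Pf_bounds: assumes "lipschitz_on L UNIV g" "\<And>y. a \<le> g y" "\<And>y. g y \<le> b"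
  shows "a \<le> Pf g z \<and> Pf g z \<le> b"
proof -
  interpret prob_space "P z" by (rule P_prob)
  have pU: "prob UNIV = 1" using prob_space by simp
  have i: "integrable (P z) g" by (rule lip_int[OF assms(1)])
  have "(\<integral>y. a \<partial>P z) \<le> Pf g z" unfolding Pf_def by (rule integral_mono) (use i assms in auto)
  moreover have "Pf g z \<le> (\<integral>y. b \<partial>P z)" unfolding Pf_def by (rule integral_mono) (use i assms in auto)
  ultimately show ?thesis by (simp add: pU)
qed

lemma Pit_bounds: assumes "lipschitz_on L UNIV g" "\<And>y. a \<le> g y" "\<And>y. g y \<le> b"
  shows "a \<le> Pit k g z \<and> Pit k g z \<le> b"
proof (induction k arbitrary: z)
  case 0 then show ?case using assms by simp
next
  case (Suc k)
  show ?case unfolding Pit_Suc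
    by (rule Pf_bounds[OF Pit_lip[OF assms(1)]]) (use Suc in auto)
qed

lemma pi_space[simp]: "space \<pi> = UNIV"
  using sets_eq_imp_space_eq[OF pi_sets] by simp

lemma pi_meas[measurable_cong]: "sets \<pi> = sets borel" by (rule pi_sets)

lemma Pf_nonneg: assumes "lipschitz_on L UNIV g" "\<And>y. 0 \<le> g y" shows "0 \<le> Pf g z"
  unfolding Pf_def by (rule Bochner_Integration.integral_nonneg) (use assms in auto)

lemma P_meas_pi: "P \<in> \<pi> \<rightarrow>\<^sub>M subprob_algebra borel"
  using P_sub measurable_cong_sets[OF pi_sets refl] by blast

lemma inv_nn: assumes "lipschitz_on L UNIV g" "\<And>y. 0 \<le> g y"
  shows "(\<integral>y. Pf g y \<partial>\<pi>) = (\<integral>y. g y \<partial>\<pi>)"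
proof -
  have gm: "g \<in> borel_measurable borel" by (rule lip_meas[OF assms(1)])
  have gm': "g \<in> borel_measurable \<pi>" using gm measurable_cong_sets[OF pi_sets refl] by blast
  have Pm: "Pf g \<in> borel_measurable \<pi>"
    using lip_meas[OF Pf_lip[OF assms(1)]] measurable_cong_sets[OF pi_sets refl] by blast
  have "(\<integral>\<^sup>+y. ennreal (g y) \<partial>(\<pi> \<bind> P)) = (\<integral>\<^sup>+y. \<integral>\<^sup>+w. ennreal (g w) \<partial>P y \<partial>\<pi>)"
    by (rule nn_integral_bind[OF _ P_meas_pi]) (use gm in simp)
  also have "\<dots> = (\<integral>\<^sup>+y. ennreal (Pf g y) \<partial>\<pi>)"
    unfolding Pf_def
    by (intro nn_integral_cong nn_integral_eq_integral) (use lip_int[OF assms(1)] assms(2) in auto)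
  finally have eq: "(\<integral>\<^sup>+y. ennreal (g y) \<partial>\<pi>) = (\<integral>\<^sup>+y. ennreal (Pf g y) \<partial>\<pi>)"
    by (simp only: pi_inv)
  show ?thesis
    using integral_eq_nn_integral[OF gm'] integral_eq_nn_integral[OF Pm] eq
      Pf_nonneg[OF assms] assms(2) by simp
qed

lemma inv_Pit: assumes "lipschitz_on L UNIV g" "\<And>y. 0 \<le> g y"
  shows "(\<integral>y. Pit k g y \<partial>\<pi>) = (\<integral>y. g y \<partial>\<pi>)"
proof (induction k)
  case (Suc k)
  have nn: "0 \<le> Pit k g y" for y
  proof (induction k arbitrary: y)
    case (Suc k) then show ?case unfolding Pit_Suc using Pf_nonneg[OF Pit_lip[OF assms(1)]] by blast
  qed (use assms in simp)
  show ?case unfolding Pit_Suc using inv_nn[OF Pit_lip[OF assms(1)] nn] Suc by simp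
qed simp

lemma prob_pi: "prob_space \<pi>" by (rule pi_prob)

lemma pi_moment: "integrable \<pi> (\<lambda>y. dist x y)"
proof -
  interpret pi: prob_space \<pi> by (rule pi_prob)
  have pU: "pi.prob UNIV = 1" using pi.prob_space by simp
  define D where "D y = dist x y" for y
  have Dl: "lipschitz_on 1 UNIV D" unfolding D_def by (rule lip_dist)
  have D0: "0 \<le> D y" for y by (simp add: D_def)
  define a where "a = Pf D x"
  have a0: "0 \<le> a" unfolding a_def by (rule Pf_nonneg[OF Dl D0])
  have h1: "Pf D y \<le> a + (1 - \<kappa>) * D y" for y
    using Pf_contr[OF Dl, of y x] by (simp add: a_def D_def dist_commute abs_le_iff)
  have affl: "lipschitz_on (0 + \<bar>1 - \<kappa>\<bar> * 1) UNIV (\<lambda>y. a + (1 - \<kappa>) * D y)"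
    by (intro lipschitz_on_add lipschitz_on_constant lipschitz_on_cmult_real Dl)
  have b: "Pit k D x \<le> a / \<kappa>" for k
  proof (induction k)
    case 0 show ?case using a0 kappa_pos by (simp add: D_def)
  next
    case (Suc k)
    have "Pit (Suc k) D x = Pit k (Pf D) x" by (simp add: Pit_Suc')
    also have "\<dots> \<le> Pit k (\<lambda>y. a + (1 - \<kappa>) * D y) x"
      by (rule Pit_mono[OF Pf_lip[OF Dl] affl h1])
    also have "\<dots> = a + (1 - \<kappa>) * Pit k D x" by (simp add: Pit_affine[OF Dl])
    also have "\<dots> \<le> a + (1 - \<kappa>) * (a / \<kappa>)"
      using mult_left_mono[OF Suc rho_nn] by simp
    also have "\<dots> = a / \<kappa>" using kappa_pos by (simp add: field_simps)
    finally show ?case .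
  qed
  have boundM: "(\<integral>y. min (D y) M \<partial>\<pi>) \<le> a / \<kappa>" if M0: "0 \<le> M" for M
  proof -
    define DM where "DM y = min (D y) M" for y
    have DMl: "lipschitz_on 1 UNIV DM" unfolding DM_def by (rule lip_min[OF Dl])
    have DM0: "0 \<le> DM y" "DM y \<le> M" "DM y \<le> D y" for y using D0 M0 by (auto simp: DM_def)
    define s where "s k y = min M (a / \<kappa> + (1 - \<kappa>) ^ k * D y)" for k y
    have s0: "0 \<le> s k y" "s k y \<le> M" for k y
      using M0 a0 kappa_pos D0[of y] rho_nn by (auto simp: s_def)
    have Pks: "Pit k DM y \<le> s k y" for k y
    proof -
      have "\<bar>Pit k DM y - Pit k DM x\<bar> \<le> 1 * (1 - \<kappa>) ^ k * dist y x"
        by (rule lip_bound[OF Pit_lip[OF DMl]])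
      moreover have "Pit k DM x \<le> Pit k D x" by (rule Pit_mono[OF DMl Dl DM0(3)])
      moreover have "Pit k DM y \<le> M" using Pit_bounds[OF DMl DM0(1) DM0(2)] by blast
      ultimately show ?thesis using b[of k] by (simp add: s_def D_def dist_commute abs_le_iff)
    qed
    have DMm: "DM \<in> borel_measurable \<pi>"
      using lip_meas[OF DMl] measurable_cong_sets[OF pi_sets refl] by blast
    have Dm: "D \<in> borel_measurable \<pi>"
      using lip_meas[OF Dl] measurable_cong_sets[OF pi_sets refl] by blast
    have sm: "s k \<in> borel_measurable \<pi>" for k unfolding s_def using Dm by measurable
    have Pkm: "Pit k DM \<in> borel_measurable \<pi>" for k
      using lip_meas[OF Pit_lip[OF DMl]] measurable_cong_sets[OF pi_sets refl] by blast
    have le: "(\<integral>y. DM y \<partial>\<pi>) \<le> (\<integral>y. s k y \<partial>\<pi>)" for k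
    proof -
      have "(\<integral>y. DM y \<partial>\<pi>) = (\<integral>y. Pit k DM y \<partial>\<pi>)" using inv_Pit[OF DMl DM0(1)] by simp
      also have "\<dots> \<le> (\<integral>y. s k y \<partial>\<pi>)"
      proof (rule integral_mono)
        show "integrable \<pi> (Pit k DM)"
          by (rule pi.integrable_const_bound[where B=M]) (use Pit_bounds[OF DMl DM0(1) DM0(2)] Pkm in auto)
        show "integrable \<pi> (s k)"
          by (rule pi.integrable_const_bound[where B=M]) (use s0 sm in auto)
      qed (rule Pks)
      finally show ?thesis .
    qed
    have lim: "(\<lambda>k. \<integral>y. s k y \<partial>\<pi>) \<longlonglongrightarrow> (\<integral>y. min M (a / \<kappa>) \<partial>\<pi>)"
    proof (rule integral_dominated_convergence[where w="\<lambda>_. M"])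
      show "(\<lambda>y. min M (a / \<kappa>)) \<in> borel_measurable \<pi>" by simp
      show "s k \<in> borel_measurable \<pi>" for k by (rule sm)
      show "integrable \<pi> (\<lambda>_. M)" by simp
      show "AE y in \<pi>. norm (s k y) \<le> M" for k using s0 by simp
      have r: "(\<lambda>k. (1 - \<kappa>) ^ k) \<longlonglongrightarrow> 0"
        by (rule LIMSEQ_power_zero) (use rho_nn kappa_pos in simp)
      show "AE y in \<pi>. (\<lambda>k. s k y) \<longlonglongrightarrow> min M (a / \<kappa>)"
      proof (rule AE_I2)
        fix y
        have "(\<lambda>k. min M (a / \<kappa> + (1 - \<kappa>) ^ k * D y)) \<longlonglongrightarrow> min M (a / \<kappa> + 0 * D y)"
          by (intro tendsto_intros r)
        then show "(\<lambda>k. s k y) \<longlonglongrightarrow> min M (a / \<kappa>)" by (simp add: s_def)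
      qed
    qed
    have "(\<integral>y. DM y \<partial>\<pi>) \<le> (\<integral>y. min M (a / \<kappa>) \<partial>\<pi>)"
      by (rule LIMSEQ_le_const[OF lim]) (use le in auto)
    also have "\<dots> \<le> a / \<kappa>" by (simp add: pU)
    finally show ?thesis by (simp add: DM_def)
  qed
  have Dm: "D \<in> borel_measurable \<pi>"
    using lip_meas[OF Dl] measurable_cong_sets[OF pi_sets refl] by blast
  have sup: "ennreal (D y) = (SUP n. ennreal (min (D y) (real n)))" for y
  proof (rule antisym)
    obtain n where n: "D y \<le> real n" using real_arch_simple by blast
    then have "ennreal (D y) = ennreal (min (D y) (real n))" by simp
    then show "ennreal (D y) \<le> (SUP n. ennreal (min (D y) (real n)))"
      by (metis SUP_upper UNIV_I)
    show "(SUP n. ennreal (min (D y) (real n))) \<le> ennreal (D y)"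
    proof (rule SUP_least)
      fix n show "ennreal (min (D y) (real n)) \<le> ennreal (D y)" by (rule ennreal_leI) (rule min.cobounded1)
    qed
  qed
  have "(\<integral>\<^sup>+y. ennreal (D y) \<partial>\<pi>) = (\<integral>\<^sup>+y. (SUP n. ennreal (min (D y) (real n))) \<partial>\<pi>)"
    by (simp only: sup[symmetric])
  also have "\<dots> = (SUP n. \<integral>\<^sup>+y. ennreal (min (D y) (real n)) \<partial>\<pi>)"
  proof (rule nn_integral_monotone_convergence_SUP)
    show "incseq (\<lambda>n y. ennreal (min (D y) (real n)))"
      by (auto simp: incseq_def le_fun_def intro!: ennreal_leI)
    show "(\<lambda>y. ennreal (min (D y) (real n))) \<in> borel_measurable \<pi>" for n using Dm by measurable
  qed
  also have "\<dots> \<le> ennreal (a / \<kappa>)"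
  proof (rule SUP_least)
    fix n
    have "(\<integral>\<^sup>+y. ennreal (min (D y) (real n)) \<partial>\<pi>) = ennreal (\<integral>y. min (D y) (real n) \<partial>\<pi>)"
    proof (rule nn_integral_eq_integral)
      show "integrable \<pi> (\<lambda>y. min (D y) (real n))"
        by (rule pi.integrable_const_bound[where B="real n"]) (use D0 Dm in auto)
    qed (use D0 in simp)
    also have "\<dots> \<le> ennreal (a / \<kappa>)" using boundM[of "real n"] by (intro ennreal_leI) simp
    finally show "(\<integral>\<^sup>+y. ennreal (min (D y) (real n)) \<partial>\<pi>) \<le> ennreal (a / \<kappa>)" .
  qed
  finally have fin: "(\<integral>\<^sup>+y. ennreal (D y) \<partial>\<pi>) \<le> ennreal (a / \<kappa>)" .
  have "(\<integral>\<^sup>+y. ennreal (D y) \<partial>\<pi>) < \<infinity>"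
    by (rule le_less_trans[OF fin]) simp
  then show ?thesis using Dm D0 by (intro integrableI_nonneg) (auto simp: D_def)
qed

lemma pi_lip_int: assumes "lipschitz_on L UNIV (g :: 'a \<Rightarrow> real)" shows "integrable \<pi> g"
proof (rule Bochner_Integration.integrable_bound[where f="\<lambda>y. \<bar>g x\<bar> + L * dist x y"])
  interpret pi: prob_space \<pi> by (rule pi_prob)
  show "integrable \<pi> (\<lambda>y. \<bar>g x\<bar> + L * dist x y)"
    using pi_moment[of x] by simp
  show "g \<in> borel_measurable \<pi>"
    using lip_meas[OF assms] measurable_cong_sets[OF pi_sets refl] by blast
  show "AE y in \<pi>. norm (g y) \<le> norm (\<bar>g x\<bar> + L * dist x y)"
  proof (rule AE_I2)
    fix y
    have "\<bar>g y - g x\<bar> \<le> L * dist x y" using lip_bound[OF assms, of y x] by (simp add: dist_commute)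
    moreover have "0 \<le> L * dist x y" using assms by (simp add: lipschitz_on_def)
    ultimately show "norm (g y) \<le> norm (\<bar>g x\<bar> + L * dist x y)" by simp
  qed
qed

end


context mc begin

abbreviation PS :: "nat \<Rightarrow> (nat \<Rightarrow> 'a) measure" where
  "PS n \<equiv> PiM {..n} (\<lambda>_. borel)"

lemma space_chain: "space (chain_law P x n) = space (PS n)"
  using chain_facts[of x n] by (intro sets_eq_imp_space_eq) simp

lemma sets_chain[measurable_cong]: "sets (chain_law P x n) = sets (PS n)"
  using chain_facts[of x n] by simp

lemma prob_chain: "prob_space (chain_law P x n)"
  using chain_facts[of x n] by simp

lemma nn_Kst: assumes w: "\<omega> \<in> space (PS n)" and h: "h \<in> borel_measurable (PS (Suc n))"
  shows "(\<integral>\<^sup>+v. h v \<partial>Kst P n \<omega>) = (\<integral>\<^sup>+y. h (fun_upd \<omega> (Suc n) y) \<partial>P (\<omega> n))"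
  unfolding Kst_def
proof (rule nn_integral_distr)
  show "h \<in> borel_measurable (distr (P (\<omega> n)) (PS (Suc n)) (\<lambda>y. fun_upd \<omega> (Suc n) y))"
    using h by (subst measurable_cong_sets[OF sets_distr refl])
  have "(\<lambda>v. fun_upd \<omega> (Suc n) v) \<in> measurable borel (Pi\<^sub>M (insert (Suc n) {..n}) (\<lambda>_. borel))"
    by (rule measurable_component_update[OF w]) simp
  then show "(\<lambda>y. fun_upd \<omega> (Suc n) y) \<in> P (\<omega> n) \<rightarrow>\<^sub>M PS (Suc n)"
    by (simp add: atMost_Suc cong: measurable_cong_sets)
qed

lemma nn_chain_Suc: assumes h: "h \<in> borel_measurable (PS (Suc n))"
  shows "(\<integral>\<^sup>+v. h v \<partial>chain_law P x (Suc n))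
     = (\<integral>\<^sup>+\<omega>. \<integral>\<^sup>+y. h (fun_upd \<omega> (Suc n) y) \<partial>P (\<omega> n) \<partial>chain_law P x n)"
proof -
  have K: "Kst P n \<in> chain_law P x n \<rightarrow>\<^sub>M subprob_algebra (PS (Suc n))"
    using Kst_meas measurable_cong_sets[OF sets_chain refl] by blast
  show ?thesis unfolding chain_law_Suc' nn_integral_bind[OF h K]
    by (intro nn_integral_cong nn_Kst h) (simp add: space_chain)
qed

lemma ecc_int: "integrable \<pi> (\<lambda>y. dist x y)" by (rule pi_moment)

lemma base_bound: assumes g: "lipschitz_on L UNIV g"
  shows "g x \<le> (\<integral>y. g y \<partial>\<pi>) + L * eccentricity \<pi> x"
proof -
  interpret pi: prob_space \<pi> by (rule pi_prob)
  have pU: "pi.prob UNIV = 1" using pi.prob_space by simp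
  have "(\<integral>y. g x - g y \<partial>\<pi>) \<le> (\<integral>y. L * dist x y \<partial>\<pi>)"
  proof (rule integral_mono)
    show "integrable \<pi> (\<lambda>y. g x - g y)" using pi_lip_int[OF g] by simp
    show "integrable \<pi> (\<lambda>y. L * dist x y)" using pi_moment[of x] by simp
    show "g x - g y \<le> L * dist x y" for y using lip_bound[OF g, of x y] by simp
  qed
  then show ?thesis using pi_lip_int[OF g] pi_moment[of x]
    by (simp add: pU eccentricity_def)
qed

lemma exp_bound: assumes "lipschitz_on L UNIV g" "\<And>y. 0 \<le> g y"
  shows "(\<integral>\<^sup>+\<omega>. ennreal (g (\<omega> k)) \<partial>chain_law P x k)
           \<le> ennreal ((\<integral>y. g y \<partial>\<pi>) + L * (1 - \<kappa>) ^ k * eccentricity \<pi> x)"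
  using assms
proof (induction k arbitrary: g L)
  case 0
  have gm: "g \<in> borel_measurable borel" by (rule lip_meas[OF 0(1)])
  have m0: "(\<lambda>\<omega>. ennreal (g (\<omega> 0))) \<in> borel_measurable (PiM {0::nat} (\<lambda>_. borel))"
    using gm by measurable
  have s0: "(\<lambda>i\<in>{0::nat}. x) \<in> space (PiM {0::nat} (\<lambda>_. borel))" by (simp add: space_PiM)
  have "(\<integral>\<^sup>+\<omega>. ennreal (g (\<omega> 0)) \<partial>chain_law P x 0) = ennreal (g x)"
    using nn_integral_return[OF s0 m0] by simp
  then show ?case using base_bound[OF 0(1)] by (simp add: ennreal_leI)
next
  case (Suc k)
  have gm: "g \<in> borel_measurable borel" by (rule lip_meas[OF Suc(2)])
  have hm: "(\<lambda>\<omega>. ennreal (g (\<omega> (Suc k)))) \<in> borel_measurable (PS (Suc k))" using gm by measurable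
  have "(\<integral>\<^sup>+\<omega>. ennreal (g (\<omega> (Suc k))) \<partial>chain_law P x (Suc k))
      = (\<integral>\<^sup>+\<omega>. \<integral>\<^sup>+y. ennreal (g y) \<partial>P (\<omega> k) \<partial>chain_law P x k)"
    unfolding nn_chain_Suc[OF hm] by simp
  also have "\<dots> = (\<integral>\<^sup>+\<omega>. ennreal (Pf g (\<omega> k)) \<partial>chain_law P x k)"
    unfolding Pf_def
    by (intro nn_integral_cong nn_integral_eq_integral) (use lip_int[OF Suc(2)] Suc(3) in auto)
  also have "\<dots> \<le> ennreal ((\<integral>y. Pf g y \<partial>\<pi>) + (L * (1 - \<kappa>)) * (1 - \<kappa>) ^ k * eccentricity \<pi> x)"
    by (rule Suc.IH[OF Pf_lip[OF Suc(2)] Pf_nonneg[OF Suc(2,3)]])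
  also have "\<dots> = ennreal ((\<integral>y. g y \<partial>\<pi>) + L * (1 - \<kappa>) ^ Suc k * eccentricity \<pi> x)"
    using inv_nn[OF Suc(2,3)] by (simp add: ac_simps)
  finally show ?case .
qed

end


lemma (in prob_space) var_expand:
  fixes u :: "'a \<Rightarrow> real"
  assumes "integrable M u" "integrable M (\<lambda>x. (u x)\<^sup>2)"
  shows "(\<integral>x. (u x - c)\<^sup>2 \<partial>M) = (\<integral>x. (u x)\<^sup>2 \<partial>M) - 2 * c * (\<integral>x. u x \<partial>M) + c\<^sup>2"
proof -
  have pU: "prob (space M) = 1" by (rule prob_space)
  have "(\<integral>x. (u x - c)\<^sup>2 \<partial>M) = (\<integral>x. (u x)\<^sup>2 - 2 * c * u x + c\<^sup>2 \<partial>M)"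
    by (intro Bochner_Integration.integral_cong) (auto simp: power2_eq_square algebra_simps)
  also have "\<dots> = (\<integral>x. (u x)\<^sup>2 \<partial>M) - 2 * c * (\<integral>x. u x \<partial>M) + c\<^sup>2"
    using assms by (simp add: pU)
  finally show ?thesis .
qed

lemma (in prob_space) var_le:
  fixes F :: "'a \<Rightarrow> real"
  assumes Fm: "F \<in> borel_measurable M"
  shows "(\<integral>\<omega>. (F \<omega> - (\<integral>\<omega>'. F \<omega>' \<partial>M))\<^sup>2 \<partial>M) \<le> enn2real (\<integral>\<^sup>+\<omega>. ennreal ((F \<omega> - a)\<^sup>2) \<partial>M)"
proof (cases "(\<integral>\<^sup>+\<omega>. ennreal ((F \<omega> - a)\<^sup>2) \<partial>M) = \<top>")
  case True
  define c where "c = (\<integral>\<omega>'. F \<omega>' \<partial>M)"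
  have "\<not> integrable M (\<lambda>\<omega>. (F \<omega> - c)\<^sup>2)"
  proof
    assume i: "integrable M (\<lambda>\<omega>. (F \<omega> - c)\<^sup>2)"
    have "integrable M (\<lambda>\<omega>. (F \<omega> - a)\<^sup>2)"
    proof (rule Bochner_Integration.integrable_bound[where f="\<lambda>\<omega>. 2 * (F \<omega> - c)\<^sup>2 + 2 * (c - a)\<^sup>2"])
      show "integrable M (\<lambda>\<omega>. 2 * (F \<omega> - c)\<^sup>2 + 2 * (c - a)\<^sup>2)" using i by simp
      show "(\<lambda>\<omega>. (F \<omega> - a)\<^sup>2) \<in> borel_measurable M" using Fm by simp
      show "AE \<omega> in M. norm ((F \<omega> - a)\<^sup>2) \<le> norm (2 * (F \<omega> - c)\<^sup>2 + 2 * (c - a)\<^sup>2)"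
      proof (rule AE_I2)
        fix \<omega>
        have "0 \<le> ((F \<omega> - c) - (c - a))\<^sup>2" by simp
        then have "(F \<omega> - a)\<^sup>2 \<le> 2 * (F \<omega> - c)\<^sup>2 + 2 * (c - a)\<^sup>2"
          by (simp add: power2_eq_square algebra_simps)
        then show "norm ((F \<omega> - a)\<^sup>2) \<le> norm (2 * (F \<omega> - c)\<^sup>2 + 2 * (c - a)\<^sup>2)" by simp
      qed
    qed
    then have "(\<integral>\<^sup>+\<omega>. ennreal ((F \<omega> - a)\<^sup>2) \<partial>M) < \<top>"
      by (simp add: integrable_iff_bounded)
    with True show False by simp
  qed
  then show ?thesis using True by (simp add: not_integrable_integral_eq c_def)
next
  case False
  define u where "u \<omega> = F \<omega> - a" for \<omega>
  have um: "u \<in> borel_measurable M" unfolding u_def using Fm by measurable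
  have u2: "integrable M (\<lambda>\<omega>. (u \<omega>)\<^sup>2)"
    by (rule integrableI_nonneg) (use Fm False in \<open>auto simp: u_def top.not_eq_extremum\<close>)
  have u1: "integrable M u"
  proof (rule Bochner_Integration.integrable_bound[where f="\<lambda>\<omega>. 1 + (u \<omega>)\<^sup>2"])
    show "integrable M (\<lambda>\<omega>. 1 + (u \<omega>)\<^sup>2)" using u2 by simp
    show "AE \<omega> in M. norm (u \<omega>) \<le> norm (1 + (u \<omega>)\<^sup>2)"
    proof (rule AE_I2)
      fix \<omega>
      have "\<bar>u \<omega>\<bar> \<le> 1 + (u \<omega>)\<^sup>2"
      proof (cases "\<bar>u \<omega>\<bar> \<le> 1")
        case True
        have "0 \<le> (u \<omega>)\<^sup>2" by simp
        with True show ?thesis by linarith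
      next
        case False
        then have "\<bar>u \<omega>\<bar> * 1 \<le> \<bar>u \<omega>\<bar> * \<bar>u \<omega>\<bar>" by (intro mult_left_mono) auto
        then show ?thesis by (simp add: power2_eq_square abs_mult_self_eq)
      qed
      then show "norm (u \<omega>) \<le> norm (1 + (u \<omega>)\<^sup>2)" by simp
    qed
  qed (rule um)
  have Fu: "F \<omega> = u \<omega> + a" for \<omega> by (simp add: u_def)
  have pU: "prob (space M) = 1" by (rule prob_space)
  have c: "(\<integral>\<omega>'. F \<omega>' \<partial>M) = (\<integral>\<omega>. u \<omega> \<partial>M) + a"
    unfolding Fu using u1 by (simp add: pU)
  have "(\<integral>\<omega>. (F \<omega> - (\<integral>\<omega>'. F \<omega>' \<partial>M))\<^sup>2 \<partial>M) = (\<integral>\<omega>. (u \<omega> - (\<integral>\<omega>. u \<omega> \<partial>M))\<^sup>2 \<partial>M)"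
    unfolding c by (intro Bochner_Integration.integral_cong) (simp_all add: u_def[abs_def] algebra_simps)
  also have "\<dots> = (\<integral>\<omega>. (u \<omega>)\<^sup>2 \<partial>M) - (\<integral>\<omega>. u \<omega> \<partial>M)\<^sup>2"
    using var_expand[OF u1 u2] by (simp add: power2_eq_square)
  also have "\<dots> \<le> (\<integral>\<omega>. (u \<omega>)\<^sup>2 \<partial>M)" by simp
  also have "\<dots> = enn2real (\<integral>\<^sup>+\<omega>. ennreal ((F \<omega> - a)\<^sup>2) \<partial>M)"
    by (subst integral_eq_nn_integral) (use Fm in \<open>auto simp: u_def\<close>)
  finally show ?thesis .
qed

context mc begin

lemma inner_id: assumes g: "lipschitz_on Lg UNIV g"
  shows "(\<integral>\<^sup>+y. ennreal ((c + g y)\<^sup>2) \<partial>P z) = ennreal ((\<integral>y. (g y - Pf g z)\<^sup>2 \<partial>P z) + (c + Pf g z)\<^sup>2)"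
proof -
  interpret prob_space "P z" by (rule P_prob)
  have pU: "prob UNIV = 1" using prob_space by simp
  have g2: "integrable (P z) (\<lambda>y. (g y)\<^sup>2)" using var_bound[OF g] by blast
  have g1: "integrable (P z) g" by (rule lip_int[OF g])
  have "(\<integral>\<^sup>+y. ennreal ((c + g y)\<^sup>2) \<partial>P z) = ennreal (\<integral>y. (c + g y)\<^sup>2 \<partial>P z)"
    apply (rule nn_integral_eq_integral)
    subgoal using g1 g2 by (auto simp: power2_sum)
    subgoal by simp
    done
  also have "(\<integral>y. (c + g y)\<^sup>2 \<partial>P z) = (\<integral>y. (g y - Pf g z)\<^sup>2 \<partial>P z) + (c + Pf g z)\<^sup>2"
  proof -
    have "(\<integral>y. (c + g y)\<^sup>2 \<partial>P z) = (\<integral>y. (g y - (- c))\<^sup>2 \<partial>P z)" by (simp add: add.commute)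
    also have "\<dots> = (\<integral>y. (g y)\<^sup>2 \<partial>P z) + 2 * c * Pf g z + c\<^sup>2"
      using var_expand[OF g1 g2, of "-c"] by (simp add: Pf_def)
    finally have a: "(\<integral>y. (c + g y)\<^sup>2 \<partial>P z) = (\<integral>y. (g y)\<^sup>2 \<partial>P z) + 2 * c * Pf g z + c\<^sup>2" .
    have b: "(\<integral>y. (g y - Pf g z)\<^sup>2 \<partial>P z) = (\<integral>y. (g y)\<^sup>2 \<partial>P z) - 2 * Pf g z * Pf g z + (Pf g z)\<^sup>2"
      using var_expand[OF g1 g2, of "Pf g z"] by (simp add: Pf_def)
    show ?thesis unfolding a b by (simp add: power2_eq_square algebra_simps)
  qed
  finally show ?thesis .
qed

end


context mc begin

definition Hc :: "(nat \<Rightarrow> real) \<Rightarrow> nat \<Rightarrow> nat \<Rightarrow> real" where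
  "Hc L n k = (\<Sum>j\<in>{k..n}. (1 - \<kappa>) ^ (j - k) * L j)"

lemma Hc_Suc: assumes "k \<le> n"
  shows "Hc L (Suc n) k = Hc (L(n := L n + L (Suc n) * (1 - \<kappa>))) n k"
proof -
  have "Hc (L(n := L n + L (Suc n) * (1 - \<kappa>))) n k
      = (\<Sum>j\<in>{k..n}. (1 - \<kappa>) ^ (j - k) * L j + (if j = n then (1 - \<kappa>) ^ (j - k) * (L (Suc n) * (1 - \<kappa>)) else 0))"
    unfolding Hc_def by (intro sum.cong) (auto simp: algebra_simps)
  also have "\<dots> = (\<Sum>j\<in>{k..n}. (1 - \<kappa>) ^ (j - k) * L j) + (1 - \<kappa>) ^ (n - k) * (L (Suc n) * (1 - \<kappa>))"
    using assms by (simp add: sum.distrib)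
  also have "\<dots> = Hc L (Suc n) k"
    using assms by (simp add: Hc_def Suc_diff_le algebra_simps)
  finally show ?thesis by simp
qed

lemma Hc_last: "Hc L (Suc n) (Suc n) = L (Suc n)" by (simp add: Hc_def)

lemma sum_meas: fixes f :: "nat \<Rightarrow> 'a \<Rightarrow> real" assumes "\<And>k. lipschitz_on (L k) UNIV (f k)"
  shows "(\<lambda>\<omega>. \<Sum>k\<le>n. f k (\<omega> k)) \<in> borel_measurable (PS n)"
proof -
  have "(\<lambda>\<omega>. f k (\<omega> k)) \<in> borel_measurable (PS n)" if "k \<in> {..n}" for k
    by (rule measurable_compose[OF measurable_component_singleton[of k "{..n}" "\<lambda>_. borel"] lip_meas[OF assms[of k]]]) (use that in simp)
  then show ?thesis by (rule borel_measurable_sum)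
qed

lemma Qlem: "(\<And>k. lipschitz_on (L k) UNIV (f k)) \<Longrightarrow>
  (\<forall>a. (\<integral>\<^sup>+\<omega>. ennreal (((\<Sum>k\<le>n. f k (\<omega> k)) - a)\<^sup>2) \<partial>chain_law P x n) < \<top>) \<and>
  (\<integral>\<omega>. ((\<Sum>k\<le>n. f k (\<omega> k)) - (\<integral>\<omega>'. (\<Sum>k\<le>n. f k (\<omega>' k)) \<partial>chain_law P x n))\<^sup>2 \<partial>chain_law P x n)
     \<le> (\<Sum>k\<in>{1..n}. \<kappa> * (Hc L n k)\<^sup>2 * enn2real (\<integral>\<^sup>+\<omega>. ennreal (S (\<omega> (k - 1))) \<partial>chain_law P x (k - 1)))"
proof (induction n arbitrary: f L)
  case 0
  have fm: "f 0 \<in> borel_measurable borel" by (rule lip_meas[OF 0])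
  have s0: "(\<lambda>i\<in>{0::nat}. x) \<in> space (PiM {0::nat} (\<lambda>_. borel))" by (simp add: space_PiM)
  have m1: "(\<lambda>\<omega>. ennreal ((f 0 (\<omega> 0) - a)\<^sup>2)) \<in> borel_measurable (PiM {0::nat} (\<lambda>_. borel))" for a
    using fm by measurable
  have m2: "(\<lambda>\<omega>. f 0 (\<omega> 0)) \<in> borel_measurable (PiM {0::nat} (\<lambda>_. borel))"
    using fm by measurable
  have m3: "(\<lambda>\<omega>. (f 0 (\<omega> 0) - c)\<^sup>2) \<in> borel_measurable (PiM {0::nat} (\<lambda>_. borel))" for c
    using fm by measurable
  show ?case
    using nn_integral_return[OF s0 m1] integral_return[OF s0 m2] integral_return[OF s0 m3] by simp
next
  case (Suc n)
  note lip = Suc.prems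
  define g where "g = f (Suc n)"
  define Lg where "Lg = L (Suc n)"
  have gl: "lipschitz_on Lg UNIV g" unfolding g_def Lg_def by (rule lip)
  define f' where "f' = f(n := (\<lambda>z. f n z + Pf g z))"
  define L' where "L' = L(n := L n + L (Suc n) * (1 - \<kappa>))"
  have lip': "lipschitz_on (L' k) UNIV (f' k)" for k
  proof (cases "k = n")
    case True
    have "lipschitz_on (L n + Lg * (1 - \<kappa>)) UNIV (\<lambda>z. f n z + Pf g z)"
      by (intro lipschitz_on_add lip Pf_lip gl)
    then show ?thesis using True by (simp add: f'_def L'_def Lg_def)
  next
    case False then show ?thesis using lip[of k] by (simp add: f'_def L'_def)
  qed
  note IH = Suc.IH[of L' f', OF lip']
  define \<Psi> where "\<Psi> \<omega> = (\<Sum>k\<le>n. f' k (\<omega> k))" for \<omega> :: "nat \<Rightarrow> 'a"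
  define G where "G \<omega> = (\<Sum>k\<le>n. f k (\<omega> k))" for \<omega> :: "nat \<Rightarrow> 'a"
  define \<Phi> where "\<Phi> \<omega> = (\<Sum>k\<le>Suc n. f k (\<omega> k))" for \<omega> :: "nat \<Rightarrow> 'a"
  have \<Psi>G: "\<Psi> \<omega> = G \<omega> + Pf g (\<omega> n)" for \<omega>
  proof -
    have "\<Psi> \<omega> = (\<Sum>k\<le>n. f k (\<omega> k) + (if k = n then Pf g (\<omega> k) else 0))"
      unfolding \<Psi>_def by (intro sum.cong) (auto simp: f'_def)
    then show ?thesis by (simp add: sum.distrib G_def)
  qed
  have \<Phi>G: "\<Phi> (fun_upd \<omega> (Suc n) y) = G \<omega> + g y" for \<omega> y
  proof -
    have "(\<Sum>k\<le>n. f k ((fun_upd \<omega> (Suc n) y) k)) = G \<omega>"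
      unfolding G_def by (intro sum.cong) auto
    then show ?thesis by (simp add: \<Phi>_def g_def)
  qed
  have \<Phi>m: "\<Phi> \<in> borel_measurable (PS (Suc n))" unfolding \<Phi>_def by (rule sum_meas[OF lip])
  have \<Psi>m: "\<Psi> \<in> borel_measurable (PS n)" unfolding \<Psi>_def by (rule sum_meas[OF lip'])
  have \<Psi>m': "\<Psi> \<in> borel_measurable (chain_law P x n)"
    using \<Psi>m measurable_cong_sets[OF sets_chain refl] by blast
  have Sm: "S \<in> borel_measurable borel" by (rule lip_meas[OF S_lip])
  define X where "X = (\<integral>\<^sup>+\<omega>. ennreal (\<kappa> * Lg\<^sup>2 * S (\<omega> n)) \<partial>chain_law P x n)"
  define ES where "ES = (\<integral>\<^sup>+\<omega>. ennreal (S (\<omega> n)) \<partial>chain_law P x n)"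
  have ESfin: "ES < \<top>"
    using exp_bound[OF S_lip S_nonneg, of x n] unfolding ES_def
    by (rule le_less_trans) simp
  have Sn: "(\<lambda>\<omega>. S (\<omega> n)) \<in> borel_measurable (PS n)"
    by (rule measurable_compose[OF measurable_component_singleton[of n "{..n}" "\<lambda>_. borel"] Sm]) simp
  have Sm': "(\<lambda>\<omega>. ennreal (S (\<omega> n))) \<in> borel_measurable (chain_law P x n)"
    using measurable_compose[OF Sn measurable_ennreal] by (subst measurable_cong_sets[OF sets_chain refl])
  have XE: "X = ennreal (\<kappa> * Lg\<^sup>2) * ES"
  proof -
    have "X = (\<integral>\<^sup>+\<omega>. ennreal (\<kappa> * Lg\<^sup>2) * ennreal (S (\<omega> n)) \<partial>chain_law P x n)"
      unfolding X_def using kappa_pos S_nonneg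
      by (intro nn_integral_cong) (simp add: ennreal_mult)
    also have "\<dots> = ennreal (\<kappa> * Lg\<^sup>2) * ES"
      unfolding ES_def by (rule nn_integral_cmult[OF Sm'])
    finally show ?thesis .
  qed
  have Xfin: "X < \<top>" unfolding XE using ESfin by (simp add: ennreal_mult_less_top)
  have Xr: "enn2real X = \<kappa> * Lg\<^sup>2 * enn2real ES"
    unfolding XE using kappa_pos by (simp add: enn2real_mult)
  define Y where "Y a = (\<integral>\<^sup>+\<omega>. ennreal ((\<Psi> \<omega> - a)\<^sup>2) \<partial>chain_law P x n)" for a
  have Yfin: "Y a < \<top>" for a using IH unfolding Y_def \<Psi>_def by blast
  have key: "(\<integral>\<^sup>+\<omega>. ennreal ((\<Phi> \<omega> - a)\<^sup>2) \<partial>chain_law P x (Suc n)) \<le> X + Y a" for a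
  proof -
    have hm: "(\<lambda>v. ennreal ((\<Phi> v - a)\<^sup>2)) \<in> borel_measurable (PS (Suc n))" using \<Phi>m by measurable
    have "(\<integral>\<^sup>+\<omega>. ennreal ((\<Phi> \<omega> - a)\<^sup>2) \<partial>chain_law P x (Suc n))
        = (\<integral>\<^sup>+\<omega>. \<integral>\<^sup>+y. ennreal (((G \<omega> - a) + g y)\<^sup>2) \<partial>P (\<omega> n) \<partial>chain_law P x n)"
      unfolding nn_chain_Suc[OF hm] \<Phi>G by (simp add: algebra_simps)
    also have "\<dots> = (\<integral>\<^sup>+\<omega>. ennreal ((\<integral>y. (g y - Pf g (\<omega> n))\<^sup>2 \<partial>P (\<omega> n)) + (G \<omega> - a + Pf g (\<omega> n))\<^sup>2) \<partial>chain_law P x n)"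
      by (simp add: inner_id[OF gl])
    also have "\<dots> \<le> (\<integral>\<^sup>+\<omega>. ennreal (\<kappa> * Lg\<^sup>2 * S (\<omega> n)) + ennreal ((\<Psi> \<omega> - a)\<^sup>2) \<partial>chain_law P x n)"
    proof (rule nn_integral_mono)
      fix \<omega>
      have v: "(\<integral>y. (g y - Pf g (\<omega> n))\<^sup>2 \<partial>P (\<omega> n)) \<le> \<kappa> * Lg\<^sup>2 * S (\<omega> n)"
        using var_bound[OF gl] by blast
      have v0: "0 \<le> (\<integral>y. (g y - Pf g (\<omega> n))\<^sup>2 \<partial>P (\<omega> n))" by simp
      have "ennreal ((\<integral>y. (g y - Pf g (\<omega> n))\<^sup>2 \<partial>P (\<omega> n)) + (G \<omega> - a + Pf g (\<omega> n))\<^sup>2)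
          \<le> ennreal (\<kappa> * Lg\<^sup>2 * S (\<omega> n) + (\<Psi> \<omega> - a)\<^sup>2)"
        using v by (intro ennreal_leI) (simp add: \<Psi>G algebra_simps)
      also have "\<dots> = ennreal (\<kappa> * Lg\<^sup>2 * S (\<omega> n)) + ennreal ((\<Psi> \<omega> - a)\<^sup>2)"
        using kappa_pos S_nonneg[of "\<omega> n"] by (intro ennreal_plus) auto
      finally show "ennreal ((\<integral>y. (g y - Pf g (\<omega> n))\<^sup>2 \<partial>P (\<omega> n)) + (G \<omega> - a + Pf g (\<omega> n))\<^sup>2)
          \<le> ennreal (\<kappa> * Lg\<^sup>2 * S (\<omega> n)) + ennreal ((\<Psi> \<omega> - a)\<^sup>2)" .
    qed
    also have "\<dots> = X + Y a"
      unfolding X_def Y_def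
      by (rule nn_integral_add) (use Sn \<Psi>m in \<open>subst measurable_cong_sets[OF sets_chain refl], measurable\<close>)+
    finally show ?thesis .
  qed
  have fin: "(\<integral>\<^sup>+\<omega>. ennreal ((\<Phi> \<omega> - a)\<^sup>2) \<partial>chain_law P x (Suc n)) < \<top>" for a
    by (rule le_less_trans[OF key]) (use Xfin Yfin in simp)
  define a0 where "a0 = (\<integral>\<omega>. \<Psi> \<omega> \<partial>chain_law P x n)"
  interpret C1: prob_space "chain_law P x (Suc n)" by (rule prob_chain)
  have \<Phi>m': "\<Phi> \<in> borel_measurable (chain_law P x (Suc n))"
    using \<Phi>m measurable_cong_sets[OF sets_chain refl] by blast
  have "(\<integral>\<omega>. (\<Phi> \<omega> - (\<integral>\<omega>'. \<Phi> \<omega>' \<partial>chain_law P x (Suc n)))\<^sup>2 \<partial>chain_law P x (Suc n))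
      \<le> enn2real (\<integral>\<^sup>+\<omega>. ennreal ((\<Phi> \<omega> - a0)\<^sup>2) \<partial>chain_law P x (Suc n))"
    by (rule C1.var_le[OF \<Phi>m'])
  also have "\<dots> \<le> enn2real (X + Y a0)"
    by (rule enn2real_mono[OF key]) (use Xfin Yfin in simp)
  also have "\<dots> = enn2real X + enn2real (Y a0)" by (rule enn2real_plus[OF Xfin Yfin])
  also have "enn2real (Y a0) = (\<integral>\<omega>. (\<Psi> \<omega> - a0)\<^sup>2 \<partial>chain_law P x n)"
    unfolding Y_def by (subst integral_eq_nn_integral) (use \<Psi>m' in auto)
  also have "\<dots> \<le> (\<Sum>k\<in>{1..n}. \<kappa> * (Hc L' n k)\<^sup>2 * enn2real (\<integral>\<^sup>+\<omega>. ennreal (S (\<omega> (k - 1))) \<partial>chain_law P x (k - 1)))"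
    using IH unfolding a0_def \<Psi>_def by blast
  also have "\<dots> = (\<Sum>k\<in>{1..n}. \<kappa> * (Hc L (Suc n) k)\<^sup>2 * enn2real (\<integral>\<^sup>+\<omega>. ennreal (S (\<omega> (k - 1))) \<partial>chain_law P x (k - 1)))"
    by (intro sum.cong refl) (simp add: Hc_Suc L'_def)
  finally have "(\<integral>\<omega>. (\<Phi> \<omega> - (\<integral>\<omega>'. \<Phi> \<omega>' \<partial>chain_law P x (Suc n)))\<^sup>2 \<partial>chain_law P x (Suc n))
     \<le> (\<Sum>k\<in>{1..Suc n}. \<kappa> * (Hc L (Suc n) k)\<^sup>2 * enn2real (\<integral>\<^sup>+\<omega>. ennreal (S (\<omega> (k - 1))) \<partial>chain_law P x (k - 1)))"
    using Xr by (simp add: Hc_last Lg_def ES_def algebra_simps)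
  then show ?case using fin unfolding \<Phi>_def by blast
qed

end


lemma geo1: fixes r :: real assumes r: "0 \<le> r" "r < 1"
  shows "(\<Sum>k\<in>{1..m}. r ^ (m + 1 - k)) \<le> r / (1 - r)"
proof (induction m)
  case 0 then show ?case using r by simp
next
  case (Suc m)
  have "(\<Sum>k\<in>{1..Suc m}. r ^ (Suc m + 1 - k)) = (\<Sum>k\<in>{1..m}. r * r ^ (m + 1 - k)) + r"
    by (simp add: Suc_diff_le)
  also have "\<dots> = r * (\<Sum>k\<in>{1..m}. r ^ (m + 1 - k)) + r" by (simp add: sum_distrib_left)
  also have "\<dots> \<le> r * (r / (1 - r)) + r" using mult_left_mono[OF Suc.IH r(1)] by simp
  also have "\<dots> = r / (1 - r)" using r by (simp add: field_simps)
  finally show ?case .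
qed

lemma geo2: fixes r :: real assumes r: "r \<noteq> 1"
  shows "(\<Sum>k\<in>{a+1..a+m}. r ^ (k - 1)) = r ^ a * (1 - r ^ m) / (1 - r)"
proof (induction m)
  case 0 then show ?case by simp
next
  case (Suc m)
  have "(\<Sum>k\<in>{a+1..a+Suc m}. r ^ (k - 1)) = (\<Sum>k\<in>{a+1..a+m}. r ^ (k - 1)) + r ^ (a + m)"
    by simp
  also have "\<dots> = r ^ a * (1 - r ^ Suc m) / (1 - r)"
    unfolding Suc using r by (simp add: field_simps power_add)
  finally show ?case .
qed

context mc begin

lemma Hc_rec: assumes "k < n" shows "Hc L n k = L k + (1 - \<kappa>) * Hc L n (Suc k)"
proof -
  have "Hc L n k = (1 - \<kappa>) ^ (k - k) * L k + (\<Sum>j\<in>{Suc k..n}. (1 - \<kappa>) ^ (j - k) * L j)"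
    unfolding Hc_def using assms by (simp add: sum.atLeast_Suc_atMost)
  also have "(\<Sum>j\<in>{Suc k..n}. (1 - \<kappa>) ^ (j - k) * L j) = (1 - \<kappa>) * Hc L n (Suc k)"
    unfolding Hc_def sum_distrib_left
  proof (intro sum.cong refl)
    fix j assume "j \<in> {Suc k..n}"
    then have "j - k = Suc (j - Suc k)" by auto
    then show "(1 - \<kappa>) ^ (j - k) * L j = (1 - \<kappa>) * ((1 - \<kappa>) ^ (j - Suc k) * L j)" by simp
  qed
  finally show ?thesis by simp
qed

lemma Hc_nonneg: "(\<And>j. 0 \<le> L j) \<Longrightarrow> 0 \<le> Hc L n k"
  unfolding Hc_def using rho_nn by (intro sum_nonneg mult_nonneg_nonneg) auto

lemma Hc_bound:
  fixes T T0 :: nat and lip :: real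
  assumes T: "1 \<le> T" and lip: "0 \<le> lip" and k: "k \<le> T0 + T"
  defines "Lk \<equiv> (\<lambda>j. if T0 + 1 \<le> j then lip / real T else 0)"
  shows "Hc Lk (T0 + T) k \<le> lip / (real T * \<kappa>) * (1 - \<kappa>) ^ (T0 + 1 - k)"
  using k
proof (induction k rule: inc_induct)
  case base
  have "Hc Lk (T0 + T) (T0 + T) = lip / real T" using T by (simp add: Hc_def Lk_def)
  also have "\<dots> \<le> lip / (real T * \<kappa>)"
    using T lip kappa_pos kappa_le by (simp add: divide_left_mono mult_le_cancel_left1)
  finally show ?case using T by simp
next
  case (step n)
  have "Hc Lk (T0 + T) n = Lk n + (1 - \<kappa>) * Hc Lk (T0 + T) (Suc n)" by (rule Hc_rec[OF step(2)])
  also have "\<dots> \<le> Lk n + (1 - \<kappa>) * (lip / (real T * \<kappa>) * (1 - \<kappa>) ^ (T0 + 1 - Suc n))"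
    using mult_left_mono[OF step(3) rho_nn] by simp
  also have "\<dots> = lip / (real T * \<kappa>) * (1 - \<kappa>) ^ (T0 + 1 - n)"
  proof (cases "T0 + 1 \<le> n")
    case True
    then show ?thesis using T kappa_pos by (simp add: Lk_def field_simps)
  next
    case False
    then have "T0 + 1 - n = Suc (T0 + 1 - Suc n)" by simp
    then show ?thesis using False by (simp add: Lk_def)
  qed
  finally show ?case .
qed

lemma final_sum:
  fixes T T0 :: nat and ES Ecc :: real
  assumes ES: "0 \<le> ES" and C: "0 \<le> C" and Ecc: "0 \<le> Ecc"
  shows "(\<Sum>k\<in>{1..T0 + T}. ((1 - \<kappa>) ^ (T0 + 1 - k))\<^sup>2 * (ES + C * (1 - \<kappa>) ^ (k - 1) * Ecc))
    \<le> (if T0 = 0 then real T * ES + C * Ecc / \<kappa>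
       else (real T + 1 / \<kappa>) * ES + 2 * C * (1 - \<kappa>) ^ T0 * Ecc / \<kappa>)"
proof -
  define \<rho> where "\<rho> = 1 - \<kappa>"
  have r0: "0 \<le> \<rho>" and r1: "\<rho> < 1" and r1': "\<rho> \<le> 1" using kappa_pos kappa_le by (auto simp: \<rho>_def)
  have k1: "1 - \<rho> = \<kappa>" by (simp add: \<rho>_def)
  define t where "t k = (\<rho> ^ (T0 + 1 - k))\<^sup>2 * (ES + C * \<rho> ^ (k - 1) * Ecc)" for k
  have split: "{1..T0 + T} = {1..T0} \<union> {T0 + 1..T0 + T}" by auto
  have sum_split: "(\<Sum>k\<in>{1..T0 + T}. t k) = (\<Sum>k\<in>{1..T0}. t k) + (\<Sum>k\<in>{T0 + 1..T0 + T}. t k)"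
    unfolding split by (rule sum.union_disjoint) auto
  have p2: "(\<Sum>k\<in>{T0 + 1..T0 + T}. t k) \<le> real T * ES + C * Ecc * \<rho> ^ T0 / \<kappa>"
  proof -
    have "(\<Sum>k\<in>{T0 + 1..T0 + T}. t k) = (\<Sum>k\<in>{T0 + 1..T0 + T}. ES + C * Ecc * \<rho> ^ (k - 1))"
      by (intro sum.cong refl) (auto simp: t_def)
    also have "\<dots> = real T * ES + C * Ecc * (\<Sum>k\<in>{T0 + 1..T0 + T}. \<rho> ^ (k - 1))"
      by (simp add: sum.distrib sum_distrib_left)
    also have "(\<Sum>k\<in>{T0 + 1..T0 + T}. \<rho> ^ (k - 1)) = \<rho> ^ T0 * (1 - \<rho> ^ T) / \<kappa>"
      using geo2[of \<rho> T0 T] r1 k1 by simp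
    also have "\<dots> \<le> \<rho> ^ T0 / \<kappa>"
      using r0 kappa_pos by (simp add: divide_right_mono mult_left_le)
    finally show ?thesis using C Ecc by (simp add: mult_left_mono)
  qed
  have p1: "(\<Sum>k\<in>{1..T0}. t k) \<le> ES / \<kappa> + C * Ecc * \<rho> ^ T0 / \<kappa>"
  proof -
    have "(\<Sum>k\<in>{1..T0}. t k) \<le> (\<Sum>k\<in>{1..T0}. ES * \<rho> ^ (T0 + 1 - k) + C * Ecc * \<rho> ^ T0 * \<rho> ^ (T0 + 1 - k))"
    proof (rule sum_mono)
      fix k assume k: "k \<in> {1..T0}"
      define e where "e = T0 + 1 - k"
      have ee: "e + (k - 1) = T0" using k by (auto simp: e_def)
      have "(\<rho> ^ e)\<^sup>2 \<le> \<rho> ^ e" using r0 r1' by (simp add: power2_eq_square mult_left_le power_le_one)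
      then have "ES * (\<rho> ^ e)\<^sup>2 \<le> ES * \<rho> ^ e" by (rule mult_left_mono[OF _ ES])
      then have a: "(\<rho> ^ e)\<^sup>2 * ES \<le> ES * \<rho> ^ e" by (simp add: mult.commute)
      have b: "(\<rho> ^ e)\<^sup>2 * (C * \<rho> ^ (k - 1) * Ecc) = C * Ecc * \<rho> ^ T0 * \<rho> ^ e"
        by (simp add: power2_eq_square ee[symmetric] power_add algebra_simps)
      have tk: "t k = (\<rho> ^ e)\<^sup>2 * ES + (\<rho> ^ e)\<^sup>2 * (C * \<rho> ^ (k - 1) * Ecc)"
        by (simp add: t_def e_def distrib_left)
      show "t k \<le> ES * \<rho> ^ (T0 + 1 - k) + C * Ecc * \<rho> ^ T0 * \<rho> ^ (T0 + 1 - k)"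
        unfolding tk b e_def[symmetric] using a by linarith
    qed
    also have "\<dots> = (ES + C * Ecc * \<rho> ^ T0) * (\<Sum>k\<in>{1..T0}. \<rho> ^ (T0 + 1 - k))"
      by (simp add: sum.distrib sum_distrib_left algebra_simps)
    also have "\<dots> \<le> (ES + C * Ecc * \<rho> ^ T0) * (1 / \<kappa>)"
    proof (rule mult_left_mono)
      have "(\<Sum>k\<in>{1..T0}. \<rho> ^ (T0 + 1 - k)) \<le> \<rho> / (1 - \<rho>)" by (rule geo1[OF r0 r1])
      also have "\<dots> \<le> 1 / \<kappa>" using k1 r1' kappa_pos by (simp add: divide_right_mono)
      finally show "(\<Sum>k\<in>{1..T0}. \<rho> ^ (T0 + 1 - k)) \<le> 1 / \<kappa>" .
      show "0 \<le> ES + C * Ecc * \<rho> ^ T0" using ES C Ecc r0 by simp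
    qed
    also have "\<dots> = ES / \<kappa> + C * Ecc * \<rho> ^ T0 / \<kappa>" by (simp add: add_divide_distrib)
    finally show ?thesis .
  qed
  show ?thesis
  proof (cases "T0 = 0")
    case True
    then show ?thesis using p2 sum_split by (simp add: t_def \<rho>_def)
  next
    case False
    have "(\<Sum>k\<in>{1..T0 + T}. t k) \<le> (real T + 1 / \<kappa>) * ES + 2 * C * \<rho> ^ T0 * Ecc / \<kappa>"
    proof -
      have eq: "(real T + 1 / \<kappa>) * ES + 2 * C * \<rho> ^ T0 * Ecc / \<kappa>
          = (ES / \<kappa> + C * Ecc * \<rho> ^ T0 / \<kappa>) + (real T * ES + C * Ecc * \<rho> ^ T0 / \<kappa>)"
        using kappa_pos by (simp add: field_simps)
      show ?thesis unfolding eq sum_split using p1 p2 by linarith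
    qed
    then show ?thesis using False by (simp add: t_def \<rho>_def)
  qed
qed

end


lemma lip_norm_ok: fixes f :: "'a::metric_space \<Rightarrow> real"
  assumes "is_lipschitz f"
  shows "lipschitz_on (lip_norm f) UNIV f \<and> 0 \<le> lip_norm f"
proof -
  obtain L where L: "lipschitz_on L UNIV f" using assms by (auto simp: is_lipschitz_def)
  define A where "A = insert 0 {\<bar>f x - f y\<bar> / dist x y | x y. x \<noteq> y}"
  have ub: "a \<le> L" if "a \<in> A" for a
  proof -
    have L0: "0 \<le> L" using L by (simp add: lipschitz_on_def)
    { fix x y :: 'a assume "x \<noteq> y"
      then have d: "0 < dist x y" by simp
      have "\<bar>f x - f y\<bar> \<le> L * dist x y" by (rule lip_bound[OF L])
      then have "\<bar>f x - f y\<bar> / dist x y \<le> L" using d by (simp add: divide_le_eq) }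
    then show ?thesis using that L0 by (auto simp: A_def)
  qed
  have bdd: "bdd_above A" using ub by (auto simp: bdd_above_def)
  have ln: "lip_norm f = Sup A" by (simp add: lip_norm_def A_def)
  have l0: "0 \<le> lip_norm f" unfolding ln by (rule cSup_upper[OF _ bdd]) (simp add: A_def)
  have "\<bar>f x - f y\<bar> \<le> lip_norm f * dist x y" for x y
  proof (cases "x = y")
    case True then show ?thesis by simp
  next
    case False
    then have d: "0 < dist x y" by simp
    have "\<bar>f x - f y\<bar> / dist x y \<le> lip_norm f"
      unfolding ln by (rule cSup_upper[OF _ bdd]) (use False in \<open>auto simp: A_def\<close>)
    then show ?thesis using d by (simp add: divide_le_eq)
  qed
  then show ?thesis using l0 by (simp add: lipschitz_on_def dist_real_def)
qed

lemma W1_nonneg: "0 \<le> W1 \<mu> \<nu>"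
  unfolding W1_def by (rule INF_greatest) simp

theorem theorem3:
  fixes P :: "'a::polish_space \<Rightarrow> 'a measure"
    and \<pi> :: "'a measure"
    and \<kappa> C :: real
    and T T0 :: nat
    and S f :: "'a \<Rightarrow> real"
    and x :: 'a
  assumes kernel: "P \<in> borel \<rightarrow>\<^sub>M prob_algebra borel"
    and first_moment: "\<And>z. integrable (P z) (\<lambda>y. dist z y)"
    and kappa_pos: "\<kappa> > 0"
    and contraction: "\<And>y z. W1 (P y) (P z) \<le> ereal ((1 - \<kappa>) * dist y z)"
    and pi_prob: "prob_space \<pi>" and pi_sets: "sets \<pi> = sets borel"
    and pi_inv: "\<pi> \<bind> P = \<pi>"
    and T_ge: "T \<ge> 1"
    and S_lip: "lipschitz_on C UNIV S"
    and S_bound: "\<And>z. sigma2 P z < \<infinity> \<and>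
                       enn2ereal (sigma2 P z / (n_loc P z * ennreal \<kappa>)) \<le> ereal (S z)"
    and f_lip: "is_lipschitz f"
  shows "(let M = chain_law P x (T0 + T);
              F = (\<lambda>\<omega>. (1 / real T) * (\<Sum>k\<in>{T0+1..T0+T}. f (\<omega> k)));
              Var = (\<integral> \<omega>. (F \<omega> - (\<integral> \<omega>'. F \<omega>' \<partial>M))\<^sup>2 \<partial>M)
          in Var \<le> (if T0 = 0
                     then (lip_norm f)\<^sup>2 / (\<kappa> * real T) *
                            ((\<integral> y. S y \<partial>\<pi>) + C / (\<kappa> * real T) * eccentricity \<pi> x)
                     else (lip_norm f)\<^sup>2 / (\<kappa> * real T) *
                            ((1 + 1 / (\<kappa> * real T)) * (\<integral> y. S y \<partial>\<pi>)
                             + 2 * C * (1 - \<kappa>) ^ T0 / (\<kappa> * real T) * eccentricity \<pi> x)))"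
proof -
  interpret kern P using kernel by unfold_locales
  define lip where "lip = lip_norm f"
  have flip: "lipschitz_on lip UNIV f" and lip0: "0 \<le> lip"
    using lip_norm_ok[OF f_lip] by (auto simp: lip_def)
  define N where "N = T0 + T"
  define F where "F \<omega> = (1 / real T) * (\<Sum>k\<in>{T0+1..T0+T}. f (\<omega> k))" for \<omega> :: "nat \<Rightarrow> 'a"
  define M where "M = chain_law P x N"
  define RHS where "RHS = (if T0 = 0
                     then lip\<^sup>2 / (\<kappa> * real T) *
                            ((\<integral> y. S y \<partial>\<pi>) + C / (\<kappa> * real T) * eccentricity \<pi> x)
                     else lip\<^sup>2 / (\<kappa> * real T) *
                            ((1 + 1 / (\<kappa> * real T)) * (\<integral> y. S y \<partial>\<pi>)
                             + 2 * C * (1 - \<kappa>) ^ T0 / (\<kappa> * real T) * eccentricity \<pi> x))"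
  have goal: "(\<integral> \<omega>. (F \<omega> - (\<integral> \<omega>'. F \<omega>' \<partial>M))\<^sup>2 \<partial>M) \<le> RHS"
  proof (cases "\<kappa> \<le> 1")
    case False
    have alleq: "y = z" for y z :: 'a
    proof -
      have "ereal 0 \<le> ereal ((1 - \<kappa>) * dist y z)"
        using order_trans[OF W1_nonneg contraction[of y z]] by simp
      then have "0 \<le> (1 - \<kappa>) * dist y z" by simp
      moreover have "1 - \<kappa> < 0" using False by simp
      ultimately have "dist y z \<le> 0" by (auto simp: zero_le_mult_iff)
      then show ?thesis by simp
    qed
    have "lip = 0" unfolding lip_def lip_norm_def using alleq by simp
    then have R0: "RHS = 0" by (simp add: RHS_def)
    interpret Mp: prob_space M unfolding M_def using chain_facts by blast
    define c where "c = (1 / real T) * (\<Sum>k\<in>{T0+1..T0+T}. f x)"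
    have Fc: "F = (\<lambda>\<omega>. c)"
    proof
      fix \<omega> :: "nat \<Rightarrow> 'a"
      have "\<omega> k = x" for k by (rule alleq)
      then show "F \<omega> = c" by (simp add: F_def c_def)
    qed
    have m1: "measure M (space M) = 1" by (rule Mp.prob_space)
    have i1: "(\<integral>\<omega>. c \<partial>M) = c" by (simp only: lebesgue_integral_const m1 scaleR_one)
    show ?thesis unfolding R0 Fc i1 by (simp only: diff_self power_zero_numeral integral_zero order_refl)
  next
    case True
    interpret mc P \<pi> \<kappa> C S
      by (intro mc.intro mc_axioms.intro kern_axioms)
         (fact first_moment kappa_pos True contraction pi_prob pi_sets pi_inv S_lip S_bound)+
    define Lk where "Lk = (\<lambda>j. if T0 + 1 \<le> j then lip / real T else 0)"
    define fam where "fam j = (\<lambda>z. if T0 + 1 \<le> j then f z / real T else 0)" for j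
    have Tpos: "0 < real T" using T_ge by simp
    have famlip: "lipschitz_on (Lk k) UNIV (fam k)" for k
    proof (cases "T0 + 1 \<le> k")
      case True
      have "\<bar>f y / real T - f z / real T\<bar> \<le> lip / real T * dist y z" for y z
      proof -
        have "\<bar>f y - f z\<bar> \<le> lip * dist y z" by (rule lip_bound[OF flip])
        then have "\<bar>f y - f z\<bar> / real T \<le> lip * dist y z / real T"
          using Tpos by (simp add: divide_right_mono)
        moreover have "\<bar>f y / real T - f z / real T\<bar> = \<bar>f y - f z\<bar> / real T"
          using Tpos by (simp add: diff_divide_distrib[symmetric] abs_divide)
        ultimately show ?thesis by simp
      qed
      then show ?thesis using True lip0 Tpos by (simp add: lipschitz_on_def fam_def Lk_def dist_real_def)
    next
      case False then show ?thesis by (simp add: fam_def Lk_def lipschitz_on_def)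
    qed
    have Fsum: "F = (\<lambda>\<omega>. \<Sum>k\<le>N. fam k (\<omega> k))"
    proof
      fix \<omega> :: "nat \<Rightarrow> 'a"
      have "(\<Sum>k\<le>N. fam k (\<omega> k)) = (\<Sum>k\<le>N. if T0 + 1 \<le> k then f (\<omega> k) / real T else 0)"
        by (simp add: fam_def)
      also have "\<dots> = (\<Sum>k\<in>{k\<in>{..N}. T0 + 1 \<le> k}. f (\<omega> k) / real T)"
        by (rule sum.inter_filter[symmetric]) simp
      also have "{k\<in>{..N}. T0 + 1 \<le> k} = {T0+1..T0+T}" by (auto simp: N_def)
      finally show "F \<omega> = (\<Sum>k\<le>N. fam k (\<omega> k))" by (simp add: F_def sum_divide_distrib)
    qed
    define E where "E k = enn2real (\<integral>\<^sup>+\<omega>. ennreal (S (\<omega> (k - 1))) \<partial>chain_law P x (k - 1))" for k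
    have Q: "(\<integral>\<omega>. (F \<omega> - (\<integral>\<omega>'. F \<omega>' \<partial>M))\<^sup>2 \<partial>M) \<le> (\<Sum>k\<in>{1..N}. \<kappa> * (Hc Lk N k)\<^sup>2 * E k)"
      using Qlem[where L=Lk and f=fam and n=N and x=x, OF famlip] unfolding Fsum M_def E_def by blast
    define ES where "ES = (\<integral>y. S y \<partial>\<pi>)"
    define Ecc where "Ecc = eccentricity \<pi> x"
    have ES0: "0 \<le> ES" unfolding ES_def by (rule Bochner_Integration.integral_nonneg) (simp add: S_nonneg)
    have Ecc0: "0 \<le> Ecc" unfolding Ecc_def eccentricity_def by (rule Bochner_Integration.integral_nonneg) simp
    have C0: "0 \<le> C" using S_lip by (simp add: lipschitz_on_def)
    have Ebd: "E k \<le> ES + C * (1 - \<kappa>) ^ (k - 1) * Ecc" for k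
    proof -
      have v0: "0 \<le> ES + C * (1 - \<kappa>) ^ (k - 1) * Ecc" using ES0 C0 Ecc0 rho_nn by simp
      have "E k \<le> enn2real (ennreal (ES + C * (1 - \<kappa>) ^ (k - 1) * Ecc))"
        unfolding E_def ES_def Ecc_def
        by (rule enn2real_mono[OF exp_bound[OF S_lip S_nonneg]]) simp
      then show ?thesis using v0 by simp
    qed
    have E0: "0 \<le> E k" for k by (simp add: E_def)
    define B where "B k = lip / (real T * \<kappa>) * (1 - \<kappa>) ^ (T0 + 1 - k)" for k
    have Hbd: "Hc Lk N k \<le> B k" if "k \<le> N" for k
      using Hc_bound[OF T_ge lip0, of k T0] that unfolding B_def Lk_def N_def by simp
    have H0: "0 \<le> Hc Lk N k" for k by (rule Hc_nonneg) (use lip0 Tpos in \<open>simp add: Lk_def\<close>)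
    have "(\<Sum>k\<in>{1..N}. \<kappa> * (Hc Lk N k)\<^sup>2 * E k)
        \<le> (\<Sum>k\<in>{1..N}. \<kappa> * (B k)\<^sup>2 * (ES + C * (1 - \<kappa>) ^ (k - 1) * Ecc))"
    proof (rule sum_mono)
      fix k assume k: "k \<in> {1..N}"
      have "(Hc Lk N k)\<^sup>2 \<le> (B k)\<^sup>2" using Hbd[of k] k H0[of k] by (intro power_mono) auto
      then have "\<kappa> * (Hc Lk N k)\<^sup>2 \<le> \<kappa> * (B k)\<^sup>2" using kappa_pos by simp
      then show "\<kappa> * (Hc Lk N k)\<^sup>2 * E k \<le> \<kappa> * (B k)\<^sup>2 * (ES + C * (1 - \<kappa>) ^ (k - 1) * Ecc)"
        using Ebd[of k] E0[of k] kappa_pos by (intro mult_mono) auto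
    qed
    also have "\<dots> = lip\<^sup>2 / ((real T)\<^sup>2 * \<kappa>) *
        (\<Sum>k\<in>{1..T0 + T}. ((1 - \<kappa>) ^ (T0 + 1 - k))\<^sup>2 * (ES + C * (1 - \<kappa>) ^ (k - 1) * Ecc))"
      unfolding sum_distrib_left N_def
      by (intro sum.cong refl) (use kappa_pos Tpos in \<open>simp add: B_def power2_eq_square field_simps\<close>)
    also have "\<dots> \<le> lip\<^sup>2 / ((real T)\<^sup>2 * \<kappa>) *
        (if T0 = 0 then real T * ES + C * Ecc / \<kappa>
         else (real T + 1 / \<kappa>) * ES + 2 * C * (1 - \<kappa>) ^ T0 * Ecc / \<kappa>)"
      by (rule mult_left_mono[OF final_sum[OF ES0 C0 Ecc0]]) (use kappa_pos in simp)
    also have "\<dots> = RHS"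
      unfolding RHS_def ES_def[symmetric] Ecc_def[symmetric]
      using kappa_pos Tpos by (simp add: field_simps power2_eq_square)
    finally show ?thesis using Q by simp
  qed
  then show ?thesis unfolding Let_def M_def F_def N_def RHS_def lip_def .
qed


end
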